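(* In the generalized nonparametric regression setting of the context, suppose (A1) holds. Let $\tilde\delta>0$ and let $\mathcal{N}_n$ be the minimal number of $\|\cdot\|_\infty$-balls of radius $\tilde\delta$ needed to cover $\mathcal{F}(L,\mathbf{p},s,F)$. Then there is a constant $C>0$ such that for any estimator $\hat f_n$ taking values in $\mathcal{F}(L,\mathbf{p},s,F)$, $$\hat R_n(\hat f_n,f_0)\le\inf_{f\in\mathcal{F}(L,\mathbf{p},s,F)}\mathbb{E}\,\ell(\mathbf{X};f,f_0)+\sqrt{\frac{2C\hat R_n(\hat f_n,f_0)\log\mathcal{N}_n}{n}}+\sqrt{2C}\Big(\frac{\log\mathcal{N}_n}{n}+\sqrt{\frac{\log\mathcal{N}_n}{n}}\tilde\delta\Big)+2\tilde\delta C+\Delta_n(\hat f_n),$$ where $\mathbf{X}$ is an independent copy of $\mathbf{x}_1$.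
   Context: Model: $(\mathbf{x}_i,y_i)$, $i=1,\dots,n$, i.i.d.; conditionally on $\mathbf{x}$, $y$ has density/mass $h(y)\exp\{yf_0(\mathbf{x})-\psi(f_0(\mathbf{x}))\}$, $\psi(\theta)=\log\int h(y)e^{\theta y}dy$. (A1): the support of $h$ does not depend on $\mathbf{x}$ and contains at least two distinct values; $f_0$ is bounded; $\mathbb{P}(|y-\mathbb{E}(y\mid\mathbf{x})|\ge t\mid\mathbf{x})\le2e^{-t/\kappa}$ for all $t>0$, some $\kappa>0$. Networks $\mathcal{F}(L,\mathbf{p},s,F)$: ReLU networks $f(\mathbf{x})=W_Lf_L(\mathbf{x})+v_L$, $f_1=\sigma(W_0\mathbf{x}+v_0)$, $f_l=\sigma(W_{l-1}f_{l-1}+v_{l-1})$, $\sigma(u)=\max(u,0)$, widths $\mathbf{p}$, parameter entries in $[-1,1]$, at most $s$ nonzero parameters, $\sup|f|\le F$. $\ell(\mathbf{x};f,f_0)=-\psi'(f_0(\mathbf{x}))(f(\mathbf{x})-f_0(\mathbf{x}))+\psi(f(\mathbf{x}))-\psi(f_0(\mathbf{x}))$; $\hat R_n(\hat f,f_0)=\mathbb{E}\big[\frac1n\sum_i\ell(\mathbf{x}_i;\hat f,f_0)\big]$. $\Delta_n(\hat f_n)=\mathbb{E}\{\frac1n\sum_i(-y_i\hat f_n(\mathbf{x}_i)+\psi(\hat f_n(\mathbf{x}_i)))-\inf_{f\in\mathcal{F}(L,\mathbf{p},s,F)}\frac1n\sum_i(-y_if(\mathbf{x}_i)+\psi(f(\mathbf{x}_i)))\}$.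 *)

theory Defs
  imports "HOL-Probability.Probability"
begin

text \<open>Vectors of R^k are represented as functions nat => real (only the first k
coordinates matter); a weight matrix is nat => nat => real.\<close>

type_synonym vec = "nat \<Rightarrow> real"
type_synonym mat = "nat \<Rightarrow> nat \<Rightarrow> real"

definition affine :: "nat \<Rightarrow> mat \<Rightarrow> vec \<Rightarrow> vec \<Rightarrow> vec" where
  "affine m W v z = (\<lambda>i. (\<Sum>j<m. W i j * z j) + v i)"

definition relu :: "vec \<Rightarrow> vec" where
  "relu z = (\<lambda>i. max (z i) 0)"

text \<open>net_eval [p0,...,p_{L+1}] [(W_0,v_0),...,(W_L,v_L)] x
  = W_L f_L(x) + v_L, with f_1 = relu(W_0 x + v_0), f_l = relu(W_{l-1} f_{l-1} + v_{l-1}).\<close>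
fun net_eval :: "nat list \<Rightarrow> (mat \<times> vec) list \<Rightarrow> vec \<Rightarrow> vec" where
  "net_eval (m # ms) [(W, v)] z = affine m W v z"
| "net_eval (m # ms) ((W, v) # (W', v') # ps) z = net_eval ms ((W', v') # ps) (relu (affine m W v z))"
| "net_eval _ _ z = z"

text \<open>Parameters: layer l has W_l of size p_{l+1} x p_l and v_l of size p_{l+1};
all entries in [-1,1]; entries outside these index ranges are zero (they do not exist).\<close>
definition valid_params :: "nat list \<Rightarrow> (mat \<times> vec) list \<Rightarrow> bool" where
  "valid_params p ps \<longleftrightarrow> length p = length ps + 1 \<and>
     (\<forall>l<length ps.
        (\<forall>i j. \<bar>fst (ps ! l) i j\<bar> \<le> 1 \<and>
               (\<not> (i < p ! (l + 1) \<and> j < p ! l) \<longrightarrow> fst (ps ! l) i j = 0)) \<and>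
        (\<forall>i. \<bar>snd (ps ! l) i\<bar> \<le> 1 \<and> (p ! (l + 1) \<le> i \<longrightarrow> snd (ps ! l) i = 0)))"

definition nnz_params :: "(mat \<times> vec) list \<Rightarrow> nat" where
  "nnz_params ps = (\<Sum>l<length ps.
      card {(i, j). fst (ps ! l) i j \<noteq> 0} + card {i. snd (ps ! l) i \<noteq> 0})"

text \<open>The class F(L,p,s,F) of real-valued ReLU networks (output width p_{L+1} = 1);
the sup-norm bound is taken over the covariate domain D.\<close>
definition relu_net_class ::
  "vec set \<Rightarrow> nat \<Rightarrow> nat list \<Rightarrow> nat \<Rightarrow> real \<Rightarrow> (vec \<Rightarrow> real) set" where
  "relu_net_class D L p s F = {f. \<exists>ps.
      length ps = L + 1 \<and> length p = L + 2 \<and> p ! (L + 1) = 1 \<and>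
      valid_params p ps \<and> nnz_params ps \<le> s \<and>
      f = (\<lambda>x. net_eval p ps x 0) \<and> (\<forall>x\<in>D. \<bar>f x\<bar> \<le> F)}"

definition sup_ball_cover :: "vec set \<Rightarrow> real \<Rightarrow> (vec \<Rightarrow> real) set \<Rightarrow> (vec \<Rightarrow> real) set \<Rightarrow> bool" where
  "sup_ball_cover D \<delta> Cs S \<longleftrightarrow> S \<subseteq> (\<Union>c\<in>Cs. {f. \<forall>x\<in>D. \<bar>f x - c x\<bar> \<le> \<delta>})"

definition covering_number :: "vec set \<Rightarrow> real \<Rightarrow> (vec \<Rightarrow> real) set \<Rightarrow> nat" where
  "covering_number D \<delta> S = (LEAST k. \<exists>Cs. finite Cs \<and> card Cs = k \<and> sup_ball_cover D \<delta> Cs S)"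

definition psi :: "(real \<Rightarrow> real) \<Rightarrow> real measure \<Rightarrow> real \<Rightarrow> real" where
  "psi h \<nu> \<theta> = ln (LINT y|\<nu>. h y * exp (\<theta> * y))"

definition cond_dens :: "(real \<Rightarrow> real) \<Rightarrow> real measure \<Rightarrow> (vec \<Rightarrow> real) \<Rightarrow> vec \<Rightarrow> real \<Rightarrow> real" where
  "cond_dens h \<nu> f0 x y = h y * exp (y * f0 x - psi h \<nu> (f0 x))"

definition h_support :: "(real \<Rightarrow> real) \<Rightarrow> real measure \<Rightarrow> real set" where
  "h_support h \<nu> = {y. \<forall>e>0. 0 < (\<integral>\<^sup>+z\<in>ball y e. ennreal (h z) \<partial>\<nu>)}"

definition ell :: "(real \<Rightarrow> real) \<Rightarrow> real measure \<Rightarrow> vec \<Rightarrow> (vec \<Rightarrow> real) \<Rightarrow> (vec \<Rightarrow> real) \<Rightarrow> real" where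
  "ell h \<nu> x f f0 = - deriv (psi h \<nu>) (f0 x) * (f x - f0 x) + psi h \<nu> (f x) - psi h \<nu> (f0 x)"

definition sample_space :: "(vec \<times> real) measure \<Rightarrow> nat \<Rightarrow> (nat \<Rightarrow> vec \<times> real) measure" where
  "sample_space P n = PiM {..<n} (\<lambda>_. P)"

definition risk_hat ::
  "(real \<Rightarrow> real) \<Rightarrow> real measure \<Rightarrow> (vec \<times> real) measure \<Rightarrow> nat \<Rightarrow>
   ((nat \<Rightarrow> vec \<times> real) \<Rightarrow> vec \<Rightarrow> real) \<Rightarrow> (vec \<Rightarrow> real) \<Rightarrow> real" where
  "risk_hat h \<nu> P n fhat f0 =
     (LINT \<omega>|sample_space P n. (1 / real n) * (\<Sum>i<n. ell h \<nu> (fst (\<omega> i)) (fhat \<omega>) f0))"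

definition emp_loss ::
  "(real \<Rightarrow> real) \<Rightarrow> real measure \<Rightarrow> nat \<Rightarrow> (nat \<Rightarrow> vec \<times> real) \<Rightarrow> (vec \<Rightarrow> real) \<Rightarrow> real" where
  "emp_loss h \<nu> n \<omega> f =
     (1 / real n) * (\<Sum>i<n. - snd (\<omega> i) * f (fst (\<omega> i)) + psi h \<nu> (f (fst (\<omega> i))))"

definition Delta_n ::
  "(real \<Rightarrow> real) \<Rightarrow> real measure \<Rightarrow> (vec \<times> real) measure \<Rightarrow> nat \<Rightarrow> (vec \<Rightarrow> real) set \<Rightarrow>
   ((nat \<Rightarrow> vec \<times> real) \<Rightarrow> vec \<Rightarrow> real) \<Rightarrow> real" where
  "Delta_n h \<nu> P n S fhat =
     (LINT \<omega>|sample_space P n. emp_loss h \<nu> n \<omega> (fhat \<omega>) - (INF f\<in>S. emp_loss h \<nu> n \<omega> f))"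

end

theory Submission
  imports Defs
begin


lemma lin3: "(a::real) \<le> b + c \<Longrightarrow> b < r \<Longrightarrow> r = a / 2 \<Longrightarrow> r \<le> c"
  by linarith

lemma pow_le_fact_exp:
  fixes x :: real assumes "0 \<le> x" shows "x ^ k \<le> fact k * exp x"
proof -
  obtain t where t: "exp x = (\<Sum>m<Suc k. x ^ m / fact m) + exp t / fact (Suc k) * x ^ Suc k"
    using Maclaurin_exp_le[of x "Suc k"] by blast
  have "x ^ k / fact k \<le> (\<Sum>m<Suc k. x ^ m / fact m)"
    by (rule member_le_sum[where f="\<lambda>m. x ^ m / fact m"]) (use assms in auto)
  also have "\<dots> \<le> exp x" unfolding t using assms by (auto intro!: mult_nonneg_nonneg)
  finally show ?thesis by (simp add: field_simps)
qed

lemma abs_pow_le_exp2: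
  fixes y :: real shows "\<bar>y\<bar> ^ k \<le> fact k * (exp y + exp (- y))"
proof -
  have "\<bar>y\<bar> ^ k \<le> fact k * exp \<bar>y\<bar>" by (rule pow_le_fact_exp) simp
  also have "exp \<bar>y\<bar> \<le> exp y + exp (-y)" by (cases "y \<ge> 0") auto
  hence "fact k * exp \<bar>y\<bar> \<le> fact k * (exp y + exp (-y))" by simp
  finally show ?thesis .
qed

lemma exp_taylor2_bound:
  fixes s :: real shows "\<bar>exp s - 1 - s\<bar> \<le> s^2 * exp \<bar>s\<bar> / 2"
proof -
  obtain t where t: "\<bar>t\<bar> \<le> \<bar>s\<bar>" "exp s = (\<Sum>m<2. s ^ m / fact m) + exp t / fact 2 * s ^ 2"
    using Maclaurin_exp_le[of s 2] by blast
  have "exp s - 1 - s = exp t / 2 * s^2" using t(2) by (simp add: numeral_2_eq_2)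
  moreover have "0 \<le> exp t / 2 * s^2" by simp
  ultimately have "\<bar>exp s - 1 - s\<bar> = exp t / 2 * s^2" by (simp only: abs_of_nonneg)
  moreover have "exp t \<le> exp \<bar>s\<bar>" using t(1) by simp
  hence "exp t / 2 * s^2 \<le> exp \<bar>s\<bar> / 2 * s^2" by (intro mult_right_mono divide_right_mono) auto
  ultimately show ?thesis by (simp add: mult.commute)
qed

locale expfam =
  fixes \<nu> :: "real measure" and h :: "real \<Rightarrow> real"
  assumes nu: "sets \<nu> = sets borel"
    and h_meas[measurable]: "h \<in> borel_measurable borel" and h_nonneg: "\<And>y. 0 \<le> h y"
    and psi_finite: "\<And>\<theta>. integrable \<nu> (\<lambda>y. h y * exp (\<theta> * y))"
begin

lemma meas_nu: "f \<in> borel_measurable borel \<Longrightarrow> f \<in> borel_measurable \<nu>"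
  using measurable_cong_sets[OF nu refl] by blast

lemma h_meas_nu[measurable]: "h \<in> borel_measurable \<nu>"
  using meas_nu[OF h_meas] .

lemma int_abs_pow: "integrable \<nu> (\<lambda>y. \<bar>y\<bar> ^ k * h y * exp (\<theta> * y))"
proof (rule Bochner_Integration.integrable_bound)
  show "integrable \<nu> (\<lambda>y. fact k * (h y * exp ((\<theta> + 1) * y)) + fact k * (h y * exp ((\<theta> - 1) * y)))"
    by (intro Bochner_Integration.integrable_add Bochner_Integration.integrable_mult_right psi_finite)
  show "(\<lambda>y. \<bar>y\<bar> ^ k * h y * exp (\<theta> * y)) \<in> borel_measurable \<nu>" by (rule meas_nu) measurable
  show "AE x in \<nu>. norm (\<bar>x\<bar> ^ k * h x * exp (\<theta> * x)) \<le> norm (fact k * (h x * exp ((\<theta> + 1) * x)) + fact k * (h x * exp ((\<theta> - 1) * x)))"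
  proof (intro AE_I2)
    fix y :: real
    have e: "exp ((\<theta> + 1) * y) = exp (\<theta> * y) * exp y" "exp ((\<theta> - 1) * y) = exp (\<theta> * y) * exp (- y)"
      by (simp_all add: algebra_simps flip: exp_add)
    have "\<bar>y\<bar> ^ k * (h y * exp (\<theta> * y)) \<le> fact k * (exp y + exp (- y)) * (h y * exp (\<theta> * y))"
      by (rule mult_right_mono[OF abs_pow_le_exp2]) (simp add: h_nonneg)
    also have "\<dots> = fact k * (h y * exp ((\<theta> + 1) * y)) + fact k * (h y * exp ((\<theta> - 1) * y))"
      unfolding e by (simp add: algebra_simps)
    finally show "norm (\<bar>y\<bar> ^ k * h y * exp (\<theta> * y)) \<le> norm (fact k * (h y * exp ((\<theta> + 1) * y)) + fact k * (h y * exp ((\<theta> - 1) * y)))"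
      using h_nonneg[of y] by (simp add: abs_mult mult.assoc)
  qed
qed

lemma int_pow: "integrable \<nu> (\<lambda>y. y ^ k * h y * exp (\<theta> * y))"
  by (rule Bochner_Integration.integrable_bound[OF int_abs_pow[of k \<theta>]])
     (auto intro!: meas_nu simp: abs_mult power_abs h_nonneg)

definition Z :: "nat \<Rightarrow> real \<Rightarrow> real" where
  "Z k \<theta> = (LINT y|\<nu>. y ^ k * h y * exp (\<theta> * y))"

lemma Z_deriv: "(Z k has_real_derivative Z (Suc k) \<theta>) (at \<theta>)"
proof -
  define W where "W = (LINT y|\<nu>. \<bar>y\<bar> ^ (k+2) * h y * exp ((\<theta> + 1) * y) + \<bar>y\<bar> ^ (k+2) * h y * exp ((\<theta> - 1) * y)) / 2"
  have bound: "\<bar>(Z k (\<theta> + t) - Z k \<theta>) / t - Z (Suc k) \<theta>\<bar> \<le> \<bar>t\<bar> * W" if t: "t \<noteq> 0" "\<bar>t\<bar> \<le> 1" for t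
  proof -
    have eq: "Z k (\<theta> + t) - Z k \<theta> - t * Z (Suc k) \<theta> = (LINT y|\<nu>. y ^ k * h y * exp (\<theta> * y) * (exp (t * y) - 1 - t * y))"
    proof -
      have "Z k (\<theta> + t) - Z k \<theta> - t * Z (Suc k) \<theta> = 
        (LINT y|\<nu>. y ^ k * h y * exp ((\<theta> + t) * y) - y ^ k * h y * exp (\<theta> * y) - t * (y ^ Suc k * h y * exp (\<theta> * y)))"
      proof -
        have i1: "integrable \<nu> (\<lambda>y. y ^ k * h y * exp ((\<theta> + t) * y) - y ^ k * h y * exp (\<theta> * y))"
          by (intro Bochner_Integration.integrable_diff int_pow)
        have i2: "integrable \<nu> (\<lambda>y. t * (y ^ Suc k * h y * exp (\<theta> * y)))"
          by (intro Bochner_Integration.integrable_mult_right int_pow)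
        show ?thesis unfolding Z_def
          by (simp only: Bochner_Integration.integral_diff[OF i1 i2] Bochner_Integration.integral_diff[OF int_pow int_pow]
             integral_mult_right_zero)
      qed
      also have "\<dots> = (LINT y|\<nu>. y ^ k * h y * exp (\<theta> * y) * (exp (t * y) - 1 - t * y))"
        by (rule Bochner_Integration.integral_cong) (auto simp: algebra_simps exp_add)
      finally show ?thesis .
    qed
    have "\<bar>Z k (\<theta> + t) - Z k \<theta> - t * Z (Suc k) \<theta>\<bar> \<le> (LINT y|\<nu>. t^2 * ((\<bar>y\<bar> ^ (k+2) * h y * exp ((\<theta> + 1) * y) + \<bar>y\<bar> ^ (k+2) * h y * exp ((\<theta> - 1) * y)) / 2))"
      unfolding eq
    proof (rule integral_abs_bound_integral)
      show "integrable \<nu> (\<lambda>y. t\<^sup>2 * ((\<bar>y\<bar> ^ (k + 2) * h y * exp ((\<theta> + 1) * y) + \<bar>y\<bar> ^ (k + 2) * h y * exp ((\<theta> - 1) * y)) / 2))"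
        by (intro Bochner_Integration.integrable_mult_right integrable_divide Bochner_Integration.integrable_add int_abs_pow)
      show "integrable \<nu> (\<lambda>y. y ^ k * h y * exp (\<theta> * y) * (exp (t * y) - 1 - t * y))"
      proof -
        have "integrable \<nu> (\<lambda>y. y ^ k * h y * exp ((\<theta> + t) * y) - y ^ k * h y * exp (\<theta> * y) - t * (y ^ Suc k * h y * exp (\<theta> * y)))"
          by (intro Bochner_Integration.integrable_diff Bochner_Integration.integrable_mult_right int_pow)
        moreover have "(\<lambda>y. y ^ k * h y * exp ((\<theta> + t) * y) - y ^ k * h y * exp (\<theta> * y) - t * (y ^ Suc k * h y * exp (\<theta> * y)))
           = (\<lambda>y. y ^ k * h y * exp (\<theta> * y) * (exp (t * y) - 1 - t * y))"
          by (auto simp: algebra_simps exp_add)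
        ultimately show ?thesis by simp
      qed
      fix y :: real
      have e: "exp ((\<theta> + 1) * y) = exp (\<theta> * y) * exp y" "exp ((\<theta> - 1) * y) = exp (\<theta> * y) * exp (- y)"
        by (simp_all add: algebra_simps flip: exp_add)
      have "\<bar>exp (t * y) - 1 - t * y\<bar> \<le> (t*y)^2 * exp \<bar>t*y\<bar> / 2" by (rule exp_taylor2_bound)
      also have "\<dots> \<le> (t*y)^2 * exp \<bar>y\<bar> / 2"
        using t by (auto intro!: divide_right_mono mult_left_mono simp: abs_mult mult_le_cancel_right1 mult_left_le_one_le)
      also have "exp \<bar>y\<bar> \<le> exp y + exp (-y)" by (cases "y \<ge> 0") auto
      hence "(t*y)^2 * exp \<bar>y\<bar> / 2 \<le> (t*y)^2 * (exp y + exp (-y)) / 2"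
        by (intro divide_right_mono mult_left_mono) auto
      finally have b: "\<bar>exp (t * y) - 1 - t * y\<bar> \<le> (t*y)^2 * (exp y + exp (-y)) / 2" .
      have "\<bar>y ^ k * h y * exp (\<theta> * y) * (exp (t * y) - 1 - t * y)\<bar> = \<bar>y\<bar>^k * h y * exp (\<theta> * y) * \<bar>exp (t * y) - 1 - t * y\<bar>"
        using h_nonneg[of y] by (simp add: abs_mult power_abs)
      also have "\<dots> \<le> \<bar>y\<bar>^k * h y * exp (\<theta> * y) * ((t*y)^2 * (exp y + exp (-y)) / 2)"
        by (intro mult_left_mono b) (auto simp: h_nonneg)
      also have "\<dots> = t\<^sup>2 * ((\<bar>y\<bar> ^ (k + 2) * h y * exp ((\<theta> + 1) * y) + \<bar>y\<bar> ^ (k + 2) * h y * exp ((\<theta> - 1) * y)) / 2)"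
        unfolding e by (simp add: algebra_simps power2_eq_square power_abs abs_mult power_mult_distrib) 
      finally show "\<bar>y ^ k * h y * exp (\<theta> * y) * (exp (t * y) - 1 - t * y)\<bar> \<le> t\<^sup>2 * ((\<bar>y\<bar> ^ (k + 2) * h y * exp ((\<theta> + 1) * y) + \<bar>y\<bar> ^ (k + 2) * h y * exp ((\<theta> - 1) * y)) / 2)" .
    qed
    also have "\<dots> = t^2 * W" unfolding W_def by simp
    finally have "\<bar>Z k (\<theta> + t) - Z k \<theta> - t * Z (Suc k) \<theta>\<bar> \<le> t^2 * W" .
    moreover have "(Z k (\<theta> + t) - Z k \<theta>) / t - Z (Suc k) \<theta> = (Z k (\<theta> + t) - Z k \<theta> - t * Z (Suc k) \<theta>) / t"
      using t by (simp add: field_simps)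
    ultimately show ?thesis using t by (simp add: abs_divide divide_le_eq power2_eq_square abs_mult mult.commute mult.left_commute)
  qed
  have "((\<lambda>t. (Z k (\<theta> + t) - Z k \<theta>) / t - Z (Suc k) \<theta>) \<longlongrightarrow> 0) (at 0)"
  proof (rule Lim_null_comparison)
    show "\<forall>\<^sub>F t in at 0. norm ((Z k (\<theta> + t) - Z k \<theta>) / t - Z (Suc k) \<theta>) \<le> \<bar>t\<bar> * W"
      unfolding eventually_at using bound by (auto intro!: exI[of _ 1] simp: dist_norm)
    show "((\<lambda>t. \<bar>t\<bar> * W) \<longlongrightarrow> 0) (at 0)"
      by (rule tendsto_eq_intros | simp)+
  qed
  hence "((\<lambda>t. (Z k (\<theta> + t) - Z k \<theta>) / t) \<longlongrightarrow> Z (Suc k) \<theta>) (at 0)"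
    by (subst Lim_null) simp
  thus ?thesis by (simp add: DERIV_def)
qed


lemma Z0_eq: "Z 0 \<theta> = (LINT y|\<nu>. h y * exp (\<theta> * y))"
  by (simp add: Z_def)

lemma psi_eq: "psi h \<nu> \<theta> = ln (Z 0 \<theta>)"
  by (simp add: psi_def Z0_eq)

lemma Z_cont: "isCont (Z k) \<theta>"
  using Z_deriv by (rule DERIV_isCont)

lemma pos_integral:
  assumes y0: "y0 \<in> h_support h \<nu>" and r: "r > 0" and c: "c > 0"
    and g_meas: "g \<in> borel_measurable borel" and g_nn: "\<And>y. 0 \<le> g y"
    and g_ball: "\<And>y. y \<in> ball y0 r \<Longrightarrow> c \<le> g y"
    and int: "integrable \<nu> (\<lambda>y. g y * h y)"
  shows "0 < (LINT y|\<nu>. g y * h y)"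
proof -
  have gm[measurable]: "g \<in> borel_measurable \<nu>" by (rule meas_nu[OF g_meas])
  have "0 < (\<integral>\<^sup>+z\<in>ball y0 r. ennreal (h z) \<partial>\<nu>)" using y0 r unfolding h_support_def by auto
  hence "0 < ennreal c * (\<integral>\<^sup>+z\<in>ball y0 r. ennreal (h z) \<partial>\<nu>)" using c
    by (simp add: ennreal_zero_less_mult_iff)
  also have "\<dots> = (\<integral>\<^sup>+z. ennreal c * (ennreal (h z) * indicator (ball y0 r) z) \<partial>\<nu>)"
  proof (rule nn_integral_cmult[symmetric])
    have [measurable]: "ball y0 r \<in> sets \<nu>" using nu by simp
    show "(\<lambda>z. ennreal (h z) * indicator (ball y0 r) z) \<in> borel_measurable \<nu>" by measurable
  qed
  also have "\<dots> \<le> (\<integral>\<^sup>+z. ennreal (g z * h z) \<partial>\<nu>)"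
  proof (rule nn_integral_mono)
    fix z
    show "ennreal c * (ennreal (h z) * indicator (ball y0 r) z) \<le> ennreal (g z * h z)"
    proof (cases "z \<in> ball y0 r")
      case True
      hence "c * h z \<le> g z * h z" using g_ball[OF True] h_nonneg[of z] by (simp add: mult_right_mono)
      thus ?thesis using True c h_nonneg[of z] by (simp add: ennreal_mult[symmetric] ennreal_leI)
    qed simp
  qed
  also have "\<dots> = ennreal (LINT y|\<nu>. g y * h y)"
    by (rule nn_integral_eq_integral[OF int]) (simp add: g_nn h_nonneg)
  finally show ?thesis by simp
qed

end


lemma tri3: "\<bar>yk - m\<bar> \<le> \<bar>y - yk\<bar> + \<bar>y - (m::real)\<bar>" by arith

locale expfam2 = expfam +
  assumes support: "\<exists>y1 y2. y1 \<noteq> y2 \<and> y1 \<in> h_support h \<nu> \<and> y2 \<in> h_support h \<nu>"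
begin

lemma Z0_pos: "0 < Z 0 \<theta>"
proof -
  obtain y1 where y1: "y1 \<in> h_support h \<nu>" using support by blast
  have "0 < (LINT y|\<nu>. exp (\<theta> * y) * h y)"
  proof (rule pos_integral[OF y1, of 1 "exp (- \<bar>\<theta>\<bar> * (\<bar>y1\<bar> + 1))"])
    fix y assume "y \<in> ball y1 1"
    hence "\<bar>y\<bar> \<le> \<bar>y1\<bar> + 1" by (auto simp: dist_real_def)
    hence "\<bar>\<theta> * y\<bar> \<le> \<bar>\<theta>\<bar> * (\<bar>y1\<bar> + 1)" by (simp add: abs_mult mult_left_mono)
    thus "exp (- \<bar>\<theta>\<bar> * (\<bar>y1\<bar> + 1)) \<le> exp (\<theta> * y)" by simp
  next
    show "integrable \<nu> (\<lambda>y. exp (\<theta> * y) * h y)" using psi_finite[of \<theta>] by (simp add: mult.commute)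
  qed auto
  thus ?thesis by (simp add: Z0_eq mult.commute)
qed

definition dpsi where "dpsi \<theta> = Z 1 \<theta> / Z 0 \<theta>"
definition d2psi where "d2psi \<theta> = (Z 2 \<theta> * Z 0 \<theta> - (Z 1 \<theta>)^2) / (Z 0 \<theta>)^2"

lemma psi_deriv: "(psi h \<nu> has_real_derivative dpsi \<theta>) (at \<theta>)"
proof -
  have "((\<lambda>t. ln (Z 0 t)) has_real_derivative (1 / Z 0 \<theta> * Z 1 \<theta>)) (at \<theta>)"
    using DERIV_ln_divide Z0_pos Z_deriv[of 0 \<theta>] 
    by (intro DERIV_chain2[where f=ln]) (auto intro: DERIV_ln_divide)
  thus ?thesis unfolding dpsi_def psi_eq[abs_def] by simp
qed

lemma dpsi_deriv: "(dpsi has_real_derivative d2psi \<theta>) (at \<theta>)"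
proof -
  have "((\<lambda>t. Z 1 t / Z 0 t) has_real_derivative (Z 2 \<theta> * Z 0 \<theta> - Z 1 \<theta> * Z 1 \<theta>) / (Z 0 \<theta> * Z 0 \<theta>)) (at \<theta>)"
    using DERIV_divide[OF Z_deriv[of 1 \<theta>] Z_deriv[of 0 \<theta>]] Z0_pos[of \<theta>] by (simp add: numeral_2_eq_2)
  thus ?thesis unfolding dpsi_def[abs_def] d2psi_def by (simp add: power2_eq_square)
qed

lemma d2psi_cont: "isCont d2psi \<theta>"
  unfolding d2psi_def[abs_def] using Z0_pos[of \<theta>]
  by (intro continuous_intros Z_cont) auto

lemma dpsi_cont: "isCont dpsi \<theta>"
  using dpsi_deriv by (rule DERIV_isCont)

lemma psi_cont: "isCont (psi h \<nu>) \<theta>"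
  using psi_deriv by (rule DERIV_isCont)

lemma deriv_psi: "deriv (psi h \<nu>) \<theta> = dpsi \<theta>"
  using psi_deriv by (rule DERIV_imp_deriv)

lemma d2psi_pos: "0 < d2psi \<theta>"
proof -
  define m where "m = Z 1 \<theta> / Z 0 \<theta>"
  have Z0: "0 < Z 0 \<theta>" by (rule Z0_pos)
  obtain y1 y2 where y12: "y1 \<noteq> y2" "y1 \<in> h_support h \<nu>" "y2 \<in> h_support h \<nu>" using support by blast
  obtain yk where yk: "yk \<in> h_support h \<nu>" "yk \<noteq> m"
  proof (cases "y1 = m")
    case True thus ?thesis using that[of y2] y12 by auto
  next
    case False thus ?thesis using that[of y1] y12 by auto
  qed
  define r where "r = \<bar>yk - m\<bar> / 2"
  have r: "r > 0" using yk by (simp add: r_def)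
  have "0 < (LINT y|\<nu>. ((y - m)^2 * exp (\<theta> * y)) * h y)"
  proof (rule pos_integral[OF yk(1) r, of "r^2 * exp (- \<bar>\<theta>\<bar> * (\<bar>yk\<bar> + r))"])
    fix y assume "y \<in> ball yk r"
    hence d: "\<bar>y - yk\<bar> < r" by (auto simp: dist_real_def abs_minus_commute)
    hence "\<bar>y\<bar> \<le> \<bar>yk\<bar> + r" by auto
    hence "\<bar>\<theta> * y\<bar> \<le> \<bar>\<theta>\<bar> * (\<bar>yk\<bar> + r)" by (simp add: abs_mult mult_left_mono)
    hence e: "exp (- \<bar>\<theta>\<bar> * (\<bar>yk\<bar> + r)) \<le> exp (\<theta> * y)" by simp
    have "\<bar>yk - m\<bar> \<le> \<bar>y - yk\<bar> + \<bar>y - m\<bar>" by (rule tri3)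
    hence "r \<le> \<bar>y - m\<bar>" using d r_def by (rule lin3)
    hence "r^2 \<le> \<bar>y - m\<bar>^2" by (rule power_mono) (use r in simp)
    hence "r^2 \<le> (y - m)^2" by simp
    thus "r^2 * exp (- \<bar>\<theta>\<bar> * (\<bar>yk\<bar> + r)) \<le> (y - m)^2 * exp (\<theta> * y)"
      by (rule mult_mono[OF _ e]) auto
  next
    have "integrable \<nu> (\<lambda>y. y^2 * h y * exp (\<theta> * y) - (2 * m) * (y^1 * h y * exp (\<theta> * y)) + m^2 * (y^0 * h y * exp (\<theta> * y)))"
      by (intro Bochner_Integration.integrable_add Bochner_Integration.integrable_diff Bochner_Integration.integrable_mult_right int_pow)
    moreover have "(\<lambda>y. y^2 * h y * exp (\<theta> * y) - (2 * m) * (y^1 * h y * exp (\<theta> * y)) + m^2 * (y^0 * h y * exp (\<theta> * y)))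
       = (\<lambda>y. ((y - m)^2 * exp (\<theta> * y)) * h y)" by (auto simp: power2_eq_square algebra_simps)
    ultimately show "integrable \<nu> (\<lambda>y. ((y - m)^2 * exp (\<theta> * y)) * h y)" by simp
  qed (use r in auto)
  also have "(LINT y|\<nu>. ((y - m)^2 * exp (\<theta> * y)) * h y) = Z 2 \<theta> - 2 * m * Z 1 \<theta> + m^2 * Z 0 \<theta>"
  proof -
    have "(LINT y|\<nu>. ((y - m)^2 * exp (\<theta> * y)) * h y) = (LINT y|\<nu>. y^2 * h y * exp (\<theta> * y) - (2 * m) * (y^1 * h y * exp (\<theta> * y)) + m^2 * (y^0 * h y * exp (\<theta> * y)))"
      by (rule Bochner_Integration.integral_cong) (auto simp: power2_eq_square algebra_simps)
    also have "\<dots> = Z 2 \<theta> - 2 * m * Z 1 \<theta> + m^2 * Z 0 \<theta>"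
    proof -
      have i1: "integrable \<nu> (\<lambda>y. y^2 * h y * exp (\<theta> * y) - (2 * m) * (y^1 * h y * exp (\<theta> * y)))"
        by (intro Bochner_Integration.integrable_diff Bochner_Integration.integrable_mult_right int_pow)
      have i2: "integrable \<nu> (\<lambda>y. m^2 * (y^0 * h y * exp (\<theta> * y)))"
        by (intro Bochner_Integration.integrable_mult_right int_pow)
      have i3: "integrable \<nu> (\<lambda>y. (2 * m) * (y^1 * h y * exp (\<theta> * y)))"
        by (intro Bochner_Integration.integrable_mult_right int_pow)
      show ?thesis unfolding Z_def
        by (simp only: Bochner_Integration.integral_add[OF i1 i2] Bochner_Integration.integral_diff[OF int_pow i3]
             integral_mult_right_zero)
    qed
    finally show ?thesis .
  qed
  also have "\<dots> = (Z 2 \<theta> * Z 0 \<theta> - (Z 1 \<theta>)^2) / Z 0 \<theta>"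
    using Z0 by (simp add: m_def field_simps power2_eq_square)
  finally have "0 < (Z 2 \<theta> * Z 0 \<theta> - (Z 1 \<theta>)^2) / Z 0 \<theta>" .
  hence "0 < Z 2 \<theta> * Z 0 \<theta> - (Z 1 \<theta>)^2" using Z0 by (simp add: zero_less_divide_iff)
  thus ?thesis unfolding d2psi_def using Z0 by simp
qed

end


lemma cont_bounded_on:
  fixes f :: "real \<Rightarrow> real"
  assumes "\<And>x. isCont f x"
  shows "\<exists>B. \<forall>x. \<bar>x\<bar> \<le> K \<longrightarrow> \<bar>f x\<bar> \<le> B"
proof (cases "K \<ge> 0")
  case True
  have "continuous_on {-K..K} (\<lambda>x. \<bar>f x\<bar>)"
    using assms by (intro continuous_at_imp_continuous_on continuous_intros) auto
  then obtain x0 where "\<forall>y\<in>{-K..K}. \<bar>f y\<bar> \<le> \<bar>f x0\<bar>"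
    using continuous_attains_sup[of "{-K..K}" "\<lambda>x. \<bar>f x\<bar>"] True by auto
  thus ?thesis by (intro exI[of _ "\<bar>f x0\<bar>"]) (auto simp: abs_le_iff)
next
  case False thus ?thesis by auto
qed

context expfam2 begin

definition Dv :: "real \<Rightarrow> real \<Rightarrow> real" where
  "Dv a b = psi h \<nu> a - psi h \<nu> b - dpsi b * (a - b)"

lemma ell_eq: "ell h \<nu> x f f0 = Dv (f x) (f0 x)"
  by (simp add: ell_def Dv_def deriv_psi algebra_simps)

lemma Dv_taylor: "\<exists>t. min a b \<le> t \<and> t \<le> max a b \<and> Dv a b = d2psi t / 2 * (a - b)^2"
proof (cases "a = b")
  case True thus ?thesis by (intro exI[of _ b]) (simp add: Dv_def)
next
  case False
  define diff where "diff = (\<lambda>k::nat. if k = 0 then psi h \<nu> else if k = 1 then dpsi else d2psi)"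
  have "\<exists>t. (if a < b then a < t \<and> t < b else b < t \<and> t < a) \<and>
    psi h \<nu> a = (\<Sum>m<2. (diff m b / fact m) * (a - b)^m) + (diff 2 t / fact 2) * (a - b)^2"
  proof (rule Taylor[of 2 diff "psi h \<nu>" "min a b" "max a b" b a])
    show "\<forall>m t. m < 2 \<and> min a b \<le> t \<and> t \<le> max a b \<longrightarrow> (diff m has_real_derivative diff (Suc m) t) (at t)"
      by (auto simp: diff_def less_2_cases_iff psi_deriv dpsi_deriv)
  qed (use False in \<open>auto simp: diff_def\<close>)
  then obtain t where t: "(if a < b then a < t \<and> t < b else b < t \<and> t < a)"
    "psi h \<nu> a = (\<Sum>m<2. (diff m b / fact m) * (a - b)^m) + (diff 2 t / fact 2) * (a - b)^2" by blast
  have "Dv a b = d2psi t / 2 * (a - b)^2"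
    using t(2) by (simp add: Dv_def diff_def numeral_2_eq_2)
  moreover have "min a b \<le> t \<and> t \<le> max a b" using t(1) by (auto split: if_splits)
  ultimately show ?thesis by blast
qed

lemma quad_bounds:
  "\<exists>m M. 0 < m \<and> (\<forall>a b. \<bar>a\<bar> \<le> K \<longrightarrow> \<bar>b\<bar> \<le> K \<longrightarrow> m * (a - b)^2 \<le> Dv a b \<and> Dv a b \<le> M * (a - b)^2)"
proof (cases "K \<ge> 0")
  case True
  have c: "continuous_on {-K..K} d2psi"
    using d2psi_cont by (intro continuous_at_imp_continuous_on) auto
  obtain t0 where t0: "t0 \<in> {-K..K}" "\<forall>y\<in>{-K..K}. d2psi t0 \<le> d2psi y"
    using continuous_attains_inf[OF _ _ c] True by auto
  obtain t1 where t1: "t1 \<in> {-K..K}" "\<forall>y\<in>{-K..K}. d2psi y \<le> d2psi t1"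
    using continuous_attains_sup[OF _ _ c] True by auto
  show ?thesis
  proof (intro exI conjI allI impI)
    show "0 < d2psi t0 / 2" using d2psi_pos[of t0] by simp
    fix a b :: real assume ab: "\<bar>a\<bar> \<le> K" "\<bar>b\<bar> \<le> K"
    obtain t where t: "min a b \<le> t" "t \<le> max a b" "Dv a b = d2psi t / 2 * (a - b)^2"
      using Dv_taylor by blast
    have tK: "t \<in> {-K..K}" using t ab by auto
    show "d2psi t0 / 2 * (a - b)^2 \<le> Dv a b" unfolding t(3)
      using t0(2) tK by (intro mult_right_mono divide_right_mono) auto
    show "Dv a b \<le> d2psi t1 / 2 * (a - b)^2" unfolding t(3)
      using t1(2) tK by (intro mult_right_mono divide_right_mono) auto
  qed
next
  case False thus ?thesis by (intro exI[of _ 1]) auto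
qed

lemma Dv_nonneg: "0 \<le> Dv a b"
proof -
  obtain m M where "0 < m" "\<forall>a' b'. \<bar>a'\<bar> \<le> max \<bar>a\<bar> \<bar>b\<bar> \<longrightarrow> \<bar>b'\<bar> \<le> max \<bar>a\<bar> \<bar>b\<bar> \<longrightarrow> m * (a' - b')^2 \<le> Dv a' b' \<and> Dv a' b' \<le> M * (a' - b')^2"
    using quad_bounds by blast
  hence "m * (a - b)^2 \<le> Dv a b" by auto
  moreover have "0 \<le> m * (a - b)^2" using \<open>0 < m\<close> by simp
  ultimately show ?thesis by linarith
qed

lemma Z0_exp_psi: "Z 0 \<theta> = exp (psi h \<nu> \<theta>)"
  using Z0_pos[of \<theta>] by (simp add: psi_eq)

lemma mgf: "(LINT y|\<nu>. h y * exp (y * b - psi h \<nu> b) * exp (s * y)) = exp (psi h \<nu> (b + s) - psi h \<nu> b)"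
proof -
  have "(LINT y|\<nu>. h y * exp (y * b - psi h \<nu> b) * exp (s * y)) = (LINT y|\<nu>. exp (- psi h \<nu> b) * (y^0 * h y * exp ((b + s) * y)))"
    by (rule Bochner_Integration.integral_cong) (auto simp: algebra_simps simp flip: exp_add)
  also have "\<dots> = exp (- psi h \<nu> b) * Z 0 (b + s)" by (simp add: Z_def)
  also have "\<dots> = exp (psi h \<nu> (b + s) - psi h \<nu> b)" by (simp add: Z0_exp_psi exp_diff exp_minus field_simps)
  finally show ?thesis .
qed

lemma int_cd: "integrable \<nu> (\<lambda>y. h y * exp (y * b - psi h \<nu> b) * exp (s * y))"
proof -
  have "integrable \<nu> (\<lambda>y. exp (- psi h \<nu> b) * (y^0 * h y * exp ((b + s) * y)))"
    by (intro Bochner_Integration.integrable_mult_right int_pow)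
  moreover have "(\<lambda>y. exp (- psi h \<nu> b) * (y^0 * h y * exp ((b + s) * y))) = (\<lambda>y. h y * exp (y * b - psi h \<nu> b) * exp (s * y))"
    by (auto simp: algebra_simps simp flip: exp_add)
  ultimately show ?thesis by metis
qed

lemma int_cd_y: "integrable \<nu> (\<lambda>y. h y * exp (y * b - psi h \<nu> b) * y)"
proof -
  have "integrable \<nu> (\<lambda>y. exp (- psi h \<nu> b) * (y^1 * h y * exp (b * y)))"
    by (intro Bochner_Integration.integrable_mult_right int_pow)
  moreover have "(\<lambda>y. exp (- psi h \<nu> b) * (y^1 * h y * exp (b * y))) = (\<lambda>y. h y * exp (y * b - psi h \<nu> b) * y)"
    by (auto simp: algebra_simps simp flip: exp_add)
  ultimately show ?thesis by metis
qed

lemma mean_cd: "(LINT y|\<nu>. h y * exp (y * b - psi h \<nu> b) * y) = dpsi b"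
proof -
  have "(LINT y|\<nu>. h y * exp (y * b - psi h \<nu> b) * y) = (LINT y|\<nu>. exp (- psi h \<nu> b) * (y^1 * h y * exp (b * y)))"
    by (rule Bochner_Integration.integral_cong) (auto simp: algebra_simps simp flip: exp_add)
  also have "\<dots> = exp (- psi h \<nu> b) * Z 1 b" by (simp add: Z_def)
  also have "\<dots> = dpsi b" using Z0_pos[of b] by (simp add: dpsi_def Z0_exp_psi exp_minus field_simps)
  finally show ?thesis .
qed

lemma total_cd: "(LINT y|\<nu>. h y * exp (y * b - psi h \<nu> b)) = 1"
  using mgf[of b 0] by simp

end


lemma cont_meas: "(\<And>x. isCont f x) \<Longrightarrow> (f::real\<Rightarrow>real) \<in> borel_measurable borel"
  by (intro borel_measurable_continuous_onI continuous_at_imp_continuous_on) auto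

context expfam2 begin
lemma psi_meas[measurable]: "psi h \<nu> \<in> borel_measurable borel" by (rule cont_meas[OF psi_cont])
lemma dpsi_meas[measurable]: "dpsi \<in> borel_measurable borel" by (rule cont_meas[OF dpsi_cont])
end

locale model = expfam2 +
  fixes f0 :: "vec \<Rightarrow> real" and \<mu> :: "vec measure" and P :: "(vec \<times> real) measure"
    and D :: "vec set" and B0 :: real
  assumes mu: "prob_space \<mu>" and mu_sets: "sets \<mu> = sets borel" and mu_D: "AE x in \<mu>. x \<in> D"
    and f0_meas[measurable]: "f0 \<in> borel_measurable borel"
    and P_sets: "sets P = sets (borel :: (vec \<times> real) measure)"
    and P_law: "\<And>A B. A \<in> sets borel \<Longrightarrow> B \<in> sets borel \<Longrightarrow>
        emeasure P (A \<times> B) = ennreal (LINT x:A|\<mu>. (LINT y:B|\<nu>. cond_dens h \<nu> f0 x y))"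
    and f0_bnd: "\<And>x. x \<in> D \<Longrightarrow> \<bar>f0 x\<bar> \<le> B0"
begin

interpretation mu: prob_space \<mu> by (rule mu)

definition nuh where "nuh = density \<nu> h"

lemma sets_nuh[measurable_cong]: "sets nuh = sets borel"
  by (simp add: nuh_def nu)

lemma space_nuh: "space nuh = UNIV"
  using sets_eq_imp_space_eq[OF sets_nuh] by simp

lemma space_mu: "space \<mu> = UNIV"
  using sets_eq_imp_space_eq[OF mu_sets] by simp

lemma finite_nuh: "finite_measure nuh"
proof (rule finite_measureI)
  have "emeasure nuh (space nuh) = (\<integral>\<^sup>+ y. ennreal (h y) \<partial>\<nu>)"
    unfolding nuh_def space_density
    by (subst emeasure_density) (auto intro!: nn_integral_cong simp: indicator_def)
  also have "\<dots> = ennreal (LINT y|\<nu>. h y * exp (0 * y))"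
    using nn_integral_eq_integral[OF psi_finite[of 0]] h_nonneg by simp
  finally show "emeasure nuh (space nuh) \<noteq> \<infinity>" by simp
qed

interpretation nuh: finite_measure nuh by (rule finite_nuh)

interpretation pair: pair_sigma_finite \<mu> nuh
  by (intro pair_sigma_finite.intro mu.sigma_finite_measure_axioms nuh.sigma_finite_measure_axioms)

abbreviation "M2 \<equiv> \<mu> \<Otimes>\<^sub>M nuh"

lemma sets_M2: "sets M2 = sets (borel :: (vec \<times> real) measure)"
  using sets_pair_measure_cong[OF mu_sets sets_nuh] borel_prod by metis

lemma sets_M2': "sets M2 = sets (borel \<Otimes>\<^sub>M (borel :: real measure) :: (vec \<times> real) measure)"
  using sets_pair_measure_cong[OF mu_sets sets_nuh] by metis

lemma meas_M2: "f \<in> borel_measurable (borel \<Otimes>\<^sub>M borel) \<Longrightarrow> f \<in> borel_measurable M2"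
  using measurable_cong_sets[OF sets_M2' refl] by blast

lemma sets_P': "sets P = sets (borel \<Otimes>\<^sub>M (borel :: real measure) :: (vec \<times> real) measure)"
  using P_sets borel_prod by metis

lemma meas_P: "f \<in> borel_measurable (borel \<Otimes>\<^sub>M borel) \<Longrightarrow> f \<in> borel_measurable P"
  using measurable_cong_sets[OF sets_P' refl] by blast

lemma meas_mu: "f \<in> borel_measurable borel \<Longrightarrow> f \<in> borel_measurable \<mu>"
  using measurable_cong_sets[OF mu_sets refl] by blast

lemma meas_nuh: "f \<in> borel_measurable borel \<Longrightarrow> f \<in> borel_measurable nuh"
  using measurable_cong_sets[OF sets_nuh refl] by blast

definition Gd :: "vec \<Rightarrow> real \<Rightarrow> real" where
  "Gd x y = exp (y * f0 x - psi h \<nu> (f0 x))"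

lemma Gd_meas[measurable]: "(\<lambda>z. Gd (fst z) (snd z)) \<in> borel_measurable (borel \<Otimes>\<^sub>M borel)"
  unfolding Gd_def by measurable

lemma cond_dens_eq: "cond_dens h \<nu> f0 x y = h y * Gd x y"
  by (simp add: cond_dens_def Gd_def)

definition Q where "Q = density M2 (\<lambda>z. ennreal (Gd (fst z) (snd z)))"

lemma nn_Q:
  assumes G: "G \<in> borel_measurable (borel \<Otimes>\<^sub>M borel)"
  shows "(\<integral>\<^sup>+z. G z \<partial>Q) = (\<integral>\<^sup>+x. (\<integral>\<^sup>+y. ennreal (h y * Gd x y) * G (x, y) \<partial>\<nu>) \<partial>\<mu>)"
proof -
  have "(\<integral>\<^sup>+z. G z \<partial>Q) = (\<integral>\<^sup>+z. ennreal (Gd (fst z) (snd z)) * G z \<partial>M2)"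
    unfolding Q_def by (rule nn_integral_density) (intro meas_M2 G; measurable)+
  also have "\<dots> = (\<integral>\<^sup>+x. (\<integral>\<^sup>+y. ennreal (Gd x y) * G (x, y) \<partial>nuh) \<partial>\<mu>)"
    by (rule nuh.nn_integral_fst[symmetric, where f="\<lambda>z. ennreal (Gd (fst z) (snd z)) * G z", simplified])
       (intro meas_M2 borel_measurable_times_ennreal measurable_compose[OF Gd_meas] G; measurable)
  also have "\<dots> = (\<integral>\<^sup>+x. (\<integral>\<^sup>+y. ennreal (h y * Gd x y) * G (x, y) \<partial>\<nu>) \<partial>\<mu>)"
  proof (rule nn_integral_cong)
    fix x
    have Gx: "(\<lambda>y. G (x, y)) \<in> borel_measurable borel" using G by measurable
    have Gdx: "(\<lambda>y. Gd x y) \<in> borel_measurable borel" unfolding Gd_def by measurable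
    show "(\<integral>\<^sup>+y. ennreal (Gd x y) * G (x, y) \<partial>nuh) = (\<integral>\<^sup>+y. ennreal (h y * Gd x y) * G (x, y) \<partial>\<nu>)"
      unfolding nuh_def
    proof (subst nn_integral_density)
      show "(\<lambda>y. ennreal (Gd x y) * G (x, y)) \<in> borel_measurable \<nu>"
        using Gx Gdx by (intro meas_nu) measurable
    qed (auto intro!: meas_nu nn_integral_cong simp: ennreal_mult h_nonneg Gd_def mult.assoc)
  qed
  finally show ?thesis .
qed


lemma nuh_density: "nuh = density \<nu> (\<lambda>y. ennreal (h y))"
  by (simp add: nuh_def)

lemma integral_nuh: "f \<in> borel_measurable borel \<Longrightarrow> lebesgue_integral nuh f = (LINT y|\<nu>. h y * f y)"
  unfolding nuh_density by (subst integral_density) (auto intro!: meas_nu simp: h_nonneg)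

lemma integrable_nuh: "f \<in> borel_measurable borel \<Longrightarrow> integrable nuh f \<longleftrightarrow> integrable \<nu> (\<lambda>y. h y * f y)"
  unfolding nuh_density by (subst integrable_density) (auto intro!: meas_nu simp: h_nonneg)

lemma Gd_meas_y[measurable]: "Gd x \<in> borel_measurable borel"
  unfolding Gd_def by measurable

lemma K_exp: "integrable nuh (\<lambda>y. Gd x y * exp (s * y))"
  "(LINT y|nuh. Gd x y * exp (s * y)) = exp (psi h \<nu> (f0 x + s) - psi h \<nu> (f0 x))"
proof -
  have m: "(\<lambda>y. Gd x y * exp (s * y)) \<in> borel_measurable borel" by measurable
  show "integrable nuh (\<lambda>y. Gd x y * exp (s * y))"
    unfolding integrable_nuh[OF m] using int_cd[of "f0 x" s] by (simp add: Gd_def mult.assoc)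
  show "(LINT y|nuh. Gd x y * exp (s * y)) = exp (psi h \<nu> (f0 x + s) - psi h \<nu> (f0 x))"
    unfolding integral_nuh[OF m] using mgf[of "f0 x" s] by (simp add: Gd_def mult.assoc)
qed

lemma K_total: "integrable nuh (Gd x)" "(LINT y|nuh. Gd x y) = 1"
  using K_exp[of x 0] by simp_all

lemma K_y: "integrable nuh (\<lambda>y. Gd x y * y)" "(LINT y|nuh. Gd x y * y) = dpsi (f0 x)"
proof -
  have m: "(\<lambda>y. Gd x y * y) \<in> borel_measurable borel" by measurable
  show "integrable nuh (\<lambda>y. Gd x y * y)"
    unfolding integrable_nuh[OF m] using int_cd_y[of "f0 x"] by (simp add: Gd_def mult.assoc)
  show "(LINT y|nuh. Gd x y * y) = dpsi (f0 x)"
    unfolding integral_nuh[OF m] using mean_cd[of "f0 x"] by (simp add: Gd_def mult.assoc)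
qed

lemma Gd_pos: "0 < Gd x y" by (simp add: Gd_def)

lemma nn_Q':
  assumes G: "G \<in> borel_measurable (borel \<Otimes>\<^sub>M borel)"
  shows "(\<integral>\<^sup>+z. G z \<partial>Q) = (\<integral>\<^sup>+x. (\<integral>\<^sup>+y. ennreal (Gd x y) * G (x, y) \<partial>nuh) \<partial>\<mu>)"
proof -
  have "(\<integral>\<^sup>+z. G z \<partial>Q) = (\<integral>\<^sup>+z. ennreal (Gd (fst z) (snd z)) * G z \<partial>M2)"
    unfolding Q_def by (rule nn_integral_density) (intro meas_M2 G; measurable)+
  also have "\<dots> = (\<integral>\<^sup>+x. (\<integral>\<^sup>+y. ennreal (Gd x y) * G (x, y) \<partial>nuh) \<partial>\<mu>)"
    by (rule nuh.nn_integral_fst[symmetric, where f="\<lambda>z. ennreal (Gd (fst z) (snd z)) * G z", simplified])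
       (intro meas_M2 borel_measurable_times_ennreal G; measurable)
  finally show ?thesis .
qed

lemma sets_Q: "sets Q = sets M2" by (simp add: Q_def)

lemma P_eq_Q: "P = Q"
proof -
  let ?E = "{a \<times> b |a b. a \<in> sets \<mu> \<and> b \<in> sets nuh}"
  have spM2: "space M2 = UNIV" by (simp add: space_pair_measure space_mu space_nuh)
  have sM2: "sets M2 = sigma_sets UNIV ?E"
    using sets_pair_measure[of \<mu> nuh] spM2 by (simp add: space_pair_measure)
  have rect: "emeasure P (a \<times> b) = emeasure Q (a \<times> b)" if a: "a \<in> sets \<mu>" and b: "b \<in> sets nuh" for a b
  proof -
    have ab: "a \<in> sets borel" "b \<in> sets borel" using a b mu_sets sets_nuh by auto
    define phi where "phi x = (LINT y|nuh. indicator b y * Gd x y)" for x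
    have phi_meas: "phi \<in> borel_measurable \<mu>"
      unfolding phi_def
    proof (rule nuh.borel_measurable_lebesgue_integral)
      show "(\<lambda>(x, y). indicator b y * Gd x y) \<in> borel_measurable M2"
        by (rule meas_M2) (use ab in measurable)
    qed
    have int_b: "integrable nuh (\<lambda>y. indicator b y * Gd x y)" for x
    proof (rule Bochner_Integration.integrable_bound[OF K_total(1)[of x]])
      show "(\<lambda>y. indicator b y * Gd x y) \<in> borel_measurable nuh" by (rule meas_nuh) (use ab in measurable)
    qed (auto simp: indicator_def Gd_pos less_imp_le)
    have phi_bnd: "0 \<le> phi x \<and> phi x \<le> 1" for x
    proof
      show "0 \<le> phi x" unfolding phi_def by (intro integral_nonneg_AE) (auto simp: Gd_pos less_imp_le)
      have "phi x \<le> (LINT y|nuh. Gd x y)" unfolding phi_def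
        by (intro integral_mono int_b K_total) (auto simp: indicator_def Gd_pos less_imp_le)
      thus "phi x \<le> 1" using K_total(2) by simp
    qed
    have phi_nu: "(LINT y:b|\<nu>. cond_dens h \<nu> f0 x y) = phi x" for x
    proof -
      have "(LINT y:b|\<nu>. cond_dens h \<nu> f0 x y) = (LINT y|\<nu>. h y * (indicator b y * Gd x y))"
        unfolding set_lebesgue_integral_def cond_dens_eq
        by (rule Bochner_Integration.integral_cong) (auto simp: indicator_def)
      also have "\<dots> = phi x" unfolding phi_def using ab by (subst integral_nuh) auto
      finally show ?thesis .
    qed
    have "emeasure Q (a \<times> b) = (\<integral>\<^sup>+z. indicator (a \<times> b) z \<partial>Q)"
      using pair_measureI[OF a b] sets_Q by (subst nn_integral_indicator) auto
    also have "\<dots> = (\<integral>\<^sup>+x. (\<integral>\<^sup>+y. ennreal (Gd x y) * indicator (a \<times> b) (x, y) \<partial>nuh) \<partial>\<mu>)"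
      by (rule nn_Q') (use ab in measurable)
    also have "\<dots> = (\<integral>\<^sup>+x. ennreal (indicator a x * phi x) \<partial>\<mu>)"
    proof (rule nn_integral_cong)
      fix x
      have "(\<integral>\<^sup>+y. ennreal (Gd x y) * indicator (a \<times> b) (x, y) \<partial>nuh) = (\<integral>\<^sup>+y. ennreal (indicator a x * (indicator b y * Gd x y)) \<partial>nuh)"
        by (intro nn_integral_cong) (auto simp: indicator_def)
      also have "\<dots> = ennreal (LINT y|nuh. indicator a x * (indicator b y * Gd x y))"
        by (intro nn_integral_eq_integral Bochner_Integration.integrable_mult_right int_b)
           (auto simp: indicator_def Gd_pos less_imp_le)
      also have "\<dots> = ennreal (indicator a x * phi x)" by (simp add: phi_def)
      finally show "(\<integral>\<^sup>+y. ennreal (Gd x y) * indicator (a \<times> b) (x, y) \<partial>nuh) = ennreal (indicator a x * phi x)" .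
    qed
    also have "\<dots> = ennreal (LINT x|\<mu>. indicator a x * phi x)"
    proof (rule nn_integral_eq_integral)
      show "integrable \<mu> (\<lambda>x. indicator a x * phi x)"
      proof (rule mu.integrable_const_bound[where B=1])
        show "AE x in \<mu>. norm (indicator a x * phi x) \<le> 1"
          using phi_bnd by (auto simp: indicator_def)
        show "(\<lambda>x. indicator a x * phi x) \<in> borel_measurable \<mu>"
          using phi_meas a by measurable
      qed
    qed (use phi_bnd in \<open>auto simp: indicator_def\<close>)
    also have "\<dots> = ennreal (LINT x:a|\<mu>. (LINT y:b|\<nu>. cond_dens h \<nu> f0 x y))"
      unfolding phi_nu unfolding set_lebesgue_integral_def by simp
    also have "\<dots> = emeasure P (a \<times> b)" using P_law[OF ab] by simp
    finally show ?thesis by simp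
  qed
  show ?thesis
  proof (rule measure_eqI_generator_eq[OF Int_stable_pair_measure_generator[of \<mu> nuh], where \<Omega>=UNIV and A="\<lambda>_. UNIV"])
    show "?E \<subseteq> Pow UNIV" by auto
    show "sets P = sigma_sets UNIV ?E" using P_sets sets_M2 sM2 by simp
    show "sets Q = sigma_sets UNIV ?E" using sets_Q sM2 by simp
    show "\<And>X. X \<in> ?E \<Longrightarrow> emeasure P X = emeasure Q X" using rect by auto
    show "range (\<lambda>_. UNIV) \<subseteq> ?E"
      using sets.top[of \<mu>] sets.top[of nuh] by (auto simp: space_mu space_nuh intro!: exI[of _ UNIV])
    show "(\<Union>i. UNIV) = UNIV" by simp
    show "emeasure P UNIV \<noteq> \<infinity>" using P_law[of UNIV UNIV] by simp
  qed
qed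

end


lemma abs_le_exp_sum: "\<bar>t::real\<bar> \<le> exp t + exp (- t)"
proof -
  have "t \<le> exp t" "- t \<le> exp (- t)" using exp_ge_add_one_self[of t] exp_ge_add_one_self[of "-t"] by linarith+
  moreover have "0 < exp t" "0 < exp (-t)" by simp_all
  ultimately show ?thesis by linarith
qed

context model begin

interpretation mu: prob_space \<mu> by (rule mu)
interpretation nuh: finite_measure nuh by (rule finite_nuh)
interpretation pair: pair_sigma_finite \<mu> nuh
  by (intro pair_sigma_finite.intro mu.sigma_finite_measure_axioms nuh.sigma_finite_measure_axioms)

lemma nn_P:
  assumes G: "G \<in> borel_measurable (borel \<Otimes>\<^sub>M borel)"
  shows "(\<integral>\<^sup>+z. G z \<partial>P) = (\<integral>\<^sup>+x. (\<integral>\<^sup>+y. ennreal (Gd x y) * G (x, y) \<partial>nuh) \<partial>\<mu>)"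
  unfolding P_eq_Q by (rule nn_Q'[OF G])

lemma prob_P: "prob_space P"
proof
  have "emeasure P (space P) = (\<integral>\<^sup>+z. 1 \<partial>P)" by simp
  also have "\<dots> = (\<integral>\<^sup>+x. (\<integral>\<^sup>+y. ennreal (Gd x y) * 1 \<partial>nuh) \<partial>\<mu>)" by (rule nn_P) simp
  also have "\<dots> = (\<integral>\<^sup>+x. 1 \<partial>\<mu>)"
  proof (rule nn_integral_cong)
    fix x
    show "(\<integral>\<^sup>+y. ennreal (Gd x y) * 1 \<partial>nuh) = 1"
      using nn_integral_eq_integral[OF K_total(1)[of x]] K_total(2)[of x] by (simp add: Gd_pos less_imp_le)
  qed
  also have "\<dots> = 1" by (simp add: mu.emeasure_space_1)
  finally show "emeasure P (space P) = 1" .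
qed

interpretation P: prob_space P by (rule prob_P)

lemma integral_P:
  assumes g: "g \<in> borel_measurable (borel \<Otimes>\<^sub>M borel)" and int: "integrable P g"
  shows "integral\<^sup>L P g = (LINT x|\<mu>. (LINT y|nuh. Gd x y * g (x, y)))"
proof -
  have gm: "g \<in> borel_measurable M2" by (rule meas_M2[OF g])
  have Gm: "(\<lambda>z. Gd (fst z) (snd z)) \<in> borel_measurable M2" by (rule meas_M2) measurable
  have intQ: "integrable Q g" using int P_eq_Q by simp
  hence int2: "integrable M2 (\<lambda>z. Gd (fst z) (snd z) * g z)"
    unfolding Q_def using integrable_density[OF gm Gm] by (simp add: Gd_pos less_imp_le)
  have "integral\<^sup>L P g = integral\<^sup>L Q g" using P_eq_Q by simp
  also have "\<dots> = (LINT z|M2. Gd (fst z) (snd z) * g z)"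
    unfolding Q_def by (subst integral_density[OF gm Gm]) (auto simp: Gd_pos less_imp_le)
  also have "\<dots> = (LINT x|\<mu>. (LINT y|nuh. Gd x y * g (x, y)))"
    using pair.integral_fst'[OF int2] by simp
  finally show ?thesis .
qed

lemma AE_P_fst:
  assumes "AE x in \<mu>. Prop x"
  shows "AE z in P. Prop (fst z)"
proof -
  obtain N where N: "{x \<in> space \<mu>. \<not> Prop x} \<subseteq> N" "emeasure \<mu> N = 0" "N \<in> sets \<mu>"
    using AE_E[OF assms] by blast
  have Nb: "N \<in> sets borel" using N(3) mu_sets by simp
  have NU: "N \<times> UNIV \<in> sets (borel \<Otimes>\<^sub>M borel)" using Nb by (intro pair_measureI) auto
  have "emeasure P (N \<times> UNIV) = (\<integral>\<^sup>+z. indicator (N \<times> UNIV) z \<partial>P)"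
    using NU sets_P' by (subst nn_integral_indicator) auto
  also have "\<dots> = (\<integral>\<^sup>+x. (\<integral>\<^sup>+y. ennreal (Gd x y) * indicator (N \<times> UNIV) (x, y) \<partial>nuh) \<partial>\<mu>)"
    by (rule nn_P) (use NU in measurable)
  also have "\<dots> = (\<integral>\<^sup>+x. indicator N x \<partial>\<mu>)"
  proof (rule nn_integral_cong)
    fix x
    have "(\<integral>\<^sup>+y. ennreal (Gd x y) * indicator (N \<times> UNIV) (x, y) \<partial>nuh) = (\<integral>\<^sup>+y. ennreal (Gd x y) \<partial>nuh) * indicator N x"
      by (cases "x \<in> N") (auto simp: indicator_def)
    also have "(\<integral>\<^sup>+y. ennreal (Gd x y) \<partial>nuh) = 1"
      using nn_integral_eq_integral[OF K_total(1)[of x]] K_total(2)[of x] by (simp add: Gd_pos less_imp_le)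
    finally show "(\<integral>\<^sup>+y. ennreal (Gd x y) * indicator (N \<times> UNIV) (x, y) \<partial>nuh) = indicator N x" by simp
  qed
  also have "\<dots> = 0" using N by simp
  finally have "emeasure P (N \<times> UNIV) = 0" .
  moreover have "{z \<in> space P. \<not> Prop (fst z)} \<subseteq> N \<times> UNIV" using N(1) by (auto simp: space_mu)
  moreover have "N \<times> UNIV \<in> sets P" using NU sets_P' by simp
  ultimately show ?thesis by (intro AE_I) auto
qed

lemma AE_P_D: "AE z in P. fst z \<in> D"
  by (rule AE_P_fst[OF mu_D])

abbreviation eps :: "vec \<times> real \<Rightarrow> real" where
  "eps z \<equiv> snd z - dpsi (f0 (fst z))"

lemma mgf_P:
  assumes S: "S \<in> borel_measurable borel"
  shows "(\<integral>\<^sup>+z. ennreal (exp (S (fst z) * eps z - Dv (f0 (fst z) + S (fst z)) (f0 (fst z)))) \<partial>P) = 1"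
proof -
  have [measurable]: "S \<in> borel_measurable borel" by (rule S)
  have "(\<integral>\<^sup>+z. ennreal (exp (S (fst z) * eps z - Dv (f0 (fst z) + S (fst z)) (f0 (fst z)))) \<partial>P)
      = (\<integral>\<^sup>+x. (\<integral>\<^sup>+y. ennreal (Gd x y) * ennreal (exp (S x * (y - dpsi (f0 x)) - Dv (f0 x + S x) (f0 x))) \<partial>nuh) \<partial>\<mu>)"
  proof -
    have m: "(\<lambda>z. ennreal (exp (S (fst z) * eps z - Dv (f0 (fst z) + S (fst z)) (f0 (fst z))))) \<in> borel_measurable (borel \<Otimes>\<^sub>M borel)"
      unfolding Dv_def by measurable
    show ?thesis by (simp only: nn_P[OF m] fst_conv snd_conv)
  qed
  also have "\<dots> = (\<integral>\<^sup>+x. 1 \<partial>\<mu>)"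
  proof (rule nn_integral_cong)
    fix x
    define b where "b = f0 x"
    define c where "c = exp (- S x * dpsi b - Dv (b + S x) b)"
    have eq: "ennreal (Gd x y) * ennreal (exp (S x * (y - dpsi (f0 x)) - Dv (f0 x + S x) (f0 x))) = ennreal (c * (Gd x y * exp (S x * y)))" for y
      by (simp add: c_def b_def ennreal_mult[symmetric] Gd_pos less_imp_le algebra_simps flip: exp_add)
    have "(\<integral>\<^sup>+y. ennreal (Gd x y) * ennreal (exp (S x * (y - dpsi (f0 x)) - Dv (f0 x + S x) (f0 x))) \<partial>nuh)
        = (\<integral>\<^sup>+y. ennreal (c * (Gd x y * exp (S x * y))) \<partial>nuh)" by (simp only: eq)
    also have "\<dots> = ennreal (LINT y|nuh. c * (Gd x y * exp (S x * y)))"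
      by (intro nn_integral_eq_integral Bochner_Integration.integrable_mult_right K_exp)
         (auto simp: c_def Gd_pos less_imp_le)
    also have "(LINT y|nuh. c * (Gd x y * exp (S x * y))) = c * exp (psi h \<nu> (b + S x) - psi h \<nu> b)"
      using K_exp(2)[of x "S x"] by (simp add: b_def)
    also have "\<dots> = 1" by (simp add: c_def Dv_def algebra_simps flip: exp_add)
    finally show "(\<integral>\<^sup>+y. ennreal (Gd x y) * ennreal (exp (S x * (y - dpsi (f0 x)) - Dv (f0 x + S x) (f0 x))) \<partial>nuh) = 1" by simp
  qed
  also have "\<dots> = 1" by (simp add: mu.emeasure_space_1)
  finally show ?thesis .
qed


lemma nn_Gd_one: "(\<integral>\<^sup>+y. ennreal (Gd x y) \<partial>nuh) = 1"
  using nn_integral_eq_integral[OF K_total(1)[of x]] K_total(2)[of x] by (simp add: Gd_pos less_imp_le)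

lemma marg_P:
  fixes phi :: "vec \<Rightarrow> real"
  assumes phi: "phi \<in> borel_measurable borel" and int: "integrable \<mu> phi"
  shows "integrable P (\<lambda>z. phi (fst z))" "(LINT z|P. phi (fst z)) = (LINT x|\<mu>. phi x)"
proof -
  have [measurable]: "phi \<in> borel_measurable borel" by (rule phi)
  have m: "(\<lambda>z. ennreal (norm (phi (fst z)))) \<in> borel_measurable (borel \<Otimes>\<^sub>M borel)" by measurable
  have "(\<integral>\<^sup>+z. ennreal (norm (phi (fst z))) \<partial>P) = (\<integral>\<^sup>+x. (\<integral>\<^sup>+y. ennreal (Gd x y) * ennreal (norm (phi x)) \<partial>nuh) \<partial>\<mu>)"
    by (simp only: nn_P[OF m] fst_conv)
  also have "\<dots> = (\<integral>\<^sup>+x. ennreal (norm (phi x)) \<partial>\<mu>)"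
    by (intro nn_integral_cong) (simp add: nn_integral_multc nn_Gd_one)
  also have "\<dots> < \<infinity>" using integrable_iff_bounded[THEN iffD1, OF int] by simp
  finally show i: "integrable P (\<lambda>z. phi (fst z))"
    by (intro integrableI_bounded) (auto intro!: meas_P)
  have "(LINT z|P. phi (fst z)) = (LINT x|\<mu>. (LINT y|nuh. Gd x y * phi x))"
    using integral_P[of "\<lambda>z. phi (fst z)", OF _ i] by simp
  also have "\<dots> = (LINT x|\<mu>. phi x)"
    by (intro Bochner_Integration.integral_cong) (simp_all add: K_total(2))
  finally show "(LINT z|P. phi (fst z)) = (LINT x|\<mu>. phi x)" .
qed

lemma eps_int: "\<exists>Ce. integrable P eps \<and> (LINT z|P. \<bar>eps z\<bar>) \<le> Ce"
proof -
  obtain m M where mM: "\<forall>a b. \<bar>a\<bar> \<le> B0 + 1 \<longrightarrow> \<bar>b\<bar> \<le> B0 + 1 \<longrightarrow> m * (a - b)^2 \<le> Dv a b \<and> Dv a b \<le> M * (a - b)^2"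
    using quad_bounds by blast
  define X1 where "X1 z = exp ((\<lambda>_. 1) (fst z) * eps z - Dv (f0 (fst z) + (\<lambda>_. 1) (fst z)) (f0 (fst z)))" for z
  define X2 where "X2 z = exp ((\<lambda>_. -1) (fst z) * eps z - Dv (f0 (fst z) + (\<lambda>_. -1) (fst z)) (f0 (fst z)))" for z
  have n1: "(\<integral>\<^sup>+z. ennreal (X1 z) \<partial>P) = 1" unfolding X1_def by (rule mgf_P) simp
  have n2: "(\<integral>\<^sup>+z. ennreal (X2 z) \<partial>P) = 1" unfolding X2_def by (rule mgf_P) simp
  have meps: "eps \<in> borel_measurable P" by (rule meas_P) measurable
  have mX1: "X1 \<in> borel_measurable P" unfolding X1_def Dv_def by (rule meas_P) measurable
  have mX2: "X2 \<in> borel_measurable P" unfolding X2_def Dv_def by (rule meas_P) measurable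
  note mX = mX1 mX2
  have bnd: "AE z in P. ennreal (norm (eps z)) \<le> ennreal (exp M) * (ennreal (X1 z) + ennreal (X2 z))"
    using AE_P_D
  proof (eventually_elim)
    case (elim z)
    define b where "b = f0 (fst z)"
    have b: "\<bar>b\<bar> \<le> B0" using f0_bnd[OF elim] by (simp add: b_def)
    have D1: "Dv (b + 1) b \<le> M" using mM[rule_format, of "b + 1" b] b by auto
    have D2: "Dv (b - 1) b \<le> M" using mM[rule_format, of "b - 1" b] b by auto
    have "\<bar>eps z\<bar> \<le> exp (eps z) + exp (- eps z)" by (rule abs_le_exp_sum)
    also have "exp (eps z) \<le> exp M * X1 z"
    proof -
      have "exp (eps z) = exp (Dv (b + 1) b) * X1 z" by (simp add: X1_def b_def flip: exp_add)
      also have "\<dots> \<le> exp M * X1 z" using D1 by (intro mult_right_mono) (auto simp: X1_def)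
      finally show ?thesis .
    qed
    also have "exp (- eps z) \<le> exp M * X2 z"
    proof -
      have "exp (- eps z) = exp (Dv (b - 1) b) * X2 z" by (simp add: X2_def b_def flip: exp_add)
      also have "\<dots> \<le> exp M * X2 z" using D2 by (intro mult_right_mono) (auto simp: X2_def)
      finally show ?thesis .
    qed
    finally have "\<bar>eps z\<bar> \<le> exp M * (X1 z + X2 z)" by (simp add: algebra_simps)
    thus ?case by (simp add: ennreal_mult[symmetric] ennreal_plus[symmetric] X1_def X2_def ennreal_leI del: ennreal_plus)
  qed
  have "(\<integral>\<^sup>+z. ennreal (norm (eps z)) \<partial>P) \<le> (\<integral>\<^sup>+z. ennreal (exp M) * (ennreal (X1 z) + ennreal (X2 z)) \<partial>P)"
    by (rule nn_integral_mono_AE[OF bnd])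
  also have "\<dots> = ennreal (exp M) * 2"
    using mX by (simp add: nn_integral_cmult nn_integral_add n1 n2 one_add_one)
  finally have nn: "(\<integral>\<^sup>+z. ennreal (norm (eps z)) \<partial>P) \<le> ennreal (2 * exp M)"
    by (simp add: ennreal_mult mult.commute)
  have i: "integrable P eps"
    by (rule integrableI_bounded[OF meps]) (use nn in \<open>auto simp: top_unique less_top[symmetric]\<close>)
  have "ennreal (LINT z|P. \<bar>eps z\<bar>) = (\<integral>\<^sup>+z. ennreal (norm (eps z)) \<partial>P)"
    by (subst nn_integral_eq_integral) (auto intro!: integrable_abs i)
  with nn have "(LINT z|P. \<bar>eps z\<bar>) \<le> 2 * exp M"
    by (metis ennreal_le_iff exp_gt_zero less_imp_le mult_pos_pos zero_less_numeral)
  with i show ?thesis by blast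
qed

lemma eps_center:
  assumes g: "g \<in> borel_measurable borel" and gb: "AE x in \<mu>. \<bar>g x\<bar> \<le> c"
  shows "integrable P (\<lambda>z. eps z * g (fst z))" "(LINT z|P. eps z * g (fst z)) = 0"
proof -
  have [measurable]: "g \<in> borel_measurable borel" by (rule g)
  obtain Ce where ie: "integrable P eps" using eps_int by blast
  have iec: "integrable P (\<lambda>z. c * eps z)" using ie by simp
  show i: "integrable P (\<lambda>z. eps z * g (fst z))"
  proof (rule Bochner_Integration.integrable_bound[OF iec])
    show "(\<lambda>z. eps z * g (fst z)) \<in> borel_measurable P" by (rule meas_P) measurable
    show "AE z in P. norm (eps z * g (fst z)) \<le> norm (c * eps z)"
      using AE_P_fst[OF gb]
    proof eventually_elim
      case (elim z)
      have "\<bar>g (fst z)\<bar> \<le> \<bar>c\<bar>" using elim by linarith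
      hence "\<bar>eps z\<bar> * \<bar>g (fst z)\<bar> \<le> \<bar>eps z\<bar> * \<bar>c\<bar>" by (intro mult_left_mono) auto
      thus ?case by (simp add: abs_mult mult.commute)
    qed
  qed
  have "(LINT z|P. eps z * g (fst z)) = (LINT x|\<mu>. (LINT y|nuh. Gd x y * ((y - dpsi (f0 x)) * g x)))"
    using integral_P[of "\<lambda>z. eps z * g (fst z)", OF _ i] by simp
  also have "\<dots> = (LINT x|\<mu>. 0)"
  proof (intro Bochner_Integration.integral_cong refl)
    fix x
    have "(LINT y|nuh. Gd x y * ((y - dpsi (f0 x)) * g x)) = (LINT y|nuh. g x * (Gd x y * y) - (g x * dpsi (f0 x)) * Gd x y)"
      by (intro Bochner_Integration.integral_cong) (auto simp: algebra_simps)
    also have "\<dots> = g x * dpsi (f0 x) - g x * dpsi (f0 x) * 1"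
      using K_y[of x] K_total[of x]
      by (subst Bochner_Integration.integral_diff) (auto intro!: Bochner_Integration.integrable_mult_right)
    finally show "(LINT y|nuh. Gd x y * ((y - dpsi (f0 x)) * g x)) = 0" by simp
  qed
  finally show "(LINT z|P. eps z * g (fst z)) = 0" by simp
qed

end


lemma Inf_unbdd_eq:
  fixes X Y :: "real set"
  assumes "\<not> bdd_below X" "\<not> bdd_below Y"
  shows "Inf X = Inf Y"
proof -
  have "\<And>z. \<not> (\<forall>x\<in>uminus ` X. x \<le> z)" "\<And>z. \<not> (\<forall>x\<in>uminus ` Y. x \<le> z)"
    using assms unfolding bdd_below_def
    by (metis add.inverse_inverse image_eqI neg_le_iff_le)+
  hence "(\<lambda>z. \<forall>x\<in>uminus ` X. x \<le> z) = (\<lambda>z. \<forall>x\<in>uminus ` Y. x \<le> z)"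
    by (intro ext iffI) blast+
  thus ?thesis unfolding Inf_real_def Sup_real_def by simp
qed

lemma inf_countable:
  fixes E :: "'a::second_countable_topology \<Rightarrow> 'f \<Rightarrow> real"
  assumes ne: "S \<noteq> {}" and cont: "\<And>f. f \<in> S \<Longrightarrow> continuous_on UNIV (\<lambda>\<omega>. E \<omega> f)"
  shows "\<exists>S'. S' \<subseteq> S \<and> countable S' \<and> S' \<noteq> {} \<and> (\<forall>\<omega>. (INF f\<in>S. E \<omega> f) = (INF f\<in>S'. E \<omega> f))"
proof -
  define U where "U f q = {\<omega>. E \<omega> f < q}" for f q
  have opn: "open (U f q)" if "f \<in> S" for f q
    unfolding U_def by (rule open_Collect_less[OF cont[OF that]]) simp
  have "\<exists>T. T \<subseteq> S \<and> countable T \<and> (\<Union>f\<in>T. U f q) = (\<Union>f\<in>S. U f q)" for q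
  proof -
    obtain \<F>' where F': "\<F>' \<subseteq> (\<lambda>f. U f q) ` S" "countable \<F>'" "\<Union>\<F>' = \<Union>((\<lambda>f. U f q) ` S)"
      using Lindelof[of "(\<lambda>f. U f q) ` S"] opn by blast
    have "\<forall>V\<in>\<F>'. \<exists>f\<in>S. V = U f q" using F'(1) by blast
    then obtain sel where sel: "\<And>V. V \<in> \<F>' \<Longrightarrow> sel V \<in> S \<and> V = U (sel V) q" by metis
    show ?thesis
    proof (intro exI conjI)
      show "sel ` \<F>' \<subseteq> S" using sel by auto
      show "countable (sel ` \<F>')" using F'(2) by simp
      show "(\<Union>f\<in>sel ` \<F>'. U f q) = (\<Union>f\<in>S. U f q)"
      proof
        show "(\<Union>f\<in>sel ` \<F>'. U f q) \<subseteq> (\<Union>f\<in>S. U f q)" using sel by auto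
        have "(\<Union>f\<in>S. U f q) = \<Union>\<F>'" using F'(3) by simp
        also have "\<dots> \<subseteq> (\<Union>f\<in>sel ` \<F>'. U f q)" using sel by blast
        finally show "(\<Union>f\<in>S. U f q) \<subseteq> (\<Union>f\<in>sel ` \<F>'. U f q)" .
      qed
    qed
  qed
  then obtain T where T: "\<And>q. T q \<subseteq> S" "\<And>q. countable (T q)" "\<And>q. (\<Union>f\<in>T q. U f q) = (\<Union>f\<in>S. U f q)"
    by metis
  obtain f1 where f1: "f1 \<in> S" using ne by blast
  define S' where "S' = insert f1 (\<Union>q\<in>\<rat>. T q)"
  have S'S: "S' \<subseteq> S" using T(1) f1 by (auto simp: S'_def)
  have key: "\<exists>f'\<in>S'. E \<omega> f' < q" if "f \<in> S" "E \<omega> f < q" "q \<in> \<rat>" for \<omega> f q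
  proof -
    have "\<omega> \<in> (\<Union>f\<in>S. U f q)" using that by (auto simp: U_def)
    hence "\<omega> \<in> (\<Union>f\<in>T q. U f q)" using T(3) by simp
    then obtain f' where "f' \<in> T q" "E \<omega> f' < q" by (auto simp: U_def)
    thus ?thesis using that(3) by (auto simp: S'_def)
  qed
  show ?thesis
  proof (intro exI conjI allI)
    show "S' \<subseteq> S" by (rule S'S)
    show "countable S'" unfolding S'_def using T(2) countable_rat by auto
    show "S' \<noteq> {}" by (simp add: S'_def)
    fix \<omega>
    let ?A = "(\<lambda>f. E \<omega> f) ` S" and ?A' = "(\<lambda>f. E \<omega> f) ` S'"
    have A'A: "?A' \<subseteq> ?A" using S'S by auto
    have A'ne: "?A' \<noteq> {}" by (simp add: S'_def)
    show "Inf ?A = Inf ?A'"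
    proof (cases "bdd_below ?A")
      case True
      have bA': "bdd_below ?A'" by (rule bdd_below_mono[OF True A'A])
      have le1: "Inf ?A \<le> Inf ?A'" by (rule cInf_superset_mono[OF A'ne True A'A])
      have le2: "Inf ?A' \<le> Inf ?A"
      proof (rule ccontr)
        assume "\<not> Inf ?A' \<le> Inf ?A"
        hence "Inf ?A < Inf ?A'" by simp
        then obtain q where q: "q \<in> \<rat>" "Inf ?A < q" "q < Inf ?A'" using Rats_dense_in_real by blast
        then obtain f where f: "f \<in> S" "E \<omega> f < q" using cInf_less_iff[of ?A q] True ne by auto
        obtain f' where f': "f' \<in> S'" "E \<omega> f' < q" using key[OF f q(1)] by blast
        have "Inf ?A' \<le> E \<omega> f'" using bA' f'(1) by (intro cInf_lower) auto
        thus False using f'(2) q(3) by simp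
      qed
      show ?thesis using le1 le2 by simp
    next
      case False
      have nb: "\<not> bdd_below ?A'"
      proof
        assume "bdd_below ?A'"
        then obtain r where r: "\<And>f. f \<in> S' \<Longrightarrow> r \<le> E \<omega> f" unfolding bdd_below_def by auto
        obtain q where q: "q \<in> \<rat>" "r - 1 < q" "q < r" using Rats_dense_in_real[of "r - 1" r] by auto
        have "\<exists>f\<in>S. E \<omega> f < q"
        proof (rule ccontr)
          assume "\<not> (\<exists>f\<in>S. E \<omega> f < q)"
          hence "bdd_below ?A" unfolding bdd_below_def by (auto intro!: exI[of _ q] simp: not_less)
          thus False using False by simp
        qed
        then obtain f where "f \<in> S" "E \<omega> f < q" by blast
        then obtain f' where "f' \<in> S'" "E \<omega> f' < q" using key q(1) by blast
        thus False using r q by fastforce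
      qed
      show ?thesis by (rule Inf_unbdd_eq[OF False nb])
    qed
  qed
qed

lemma net_eval_cont:
  fixes g :: "'a::topological_space \<Rightarrow> vec"
  assumes "\<And>j. continuous_on UNIV (\<lambda>t. g t j)"
  shows "continuous_on UNIV (\<lambda>t. net_eval p ps (g t) i)"
  using assms
proof (induction ps arbitrary: p g i)
  case Nil
  thus ?case by (cases p) auto
next
  case (Cons wv ps)
  obtain W v where wv: "wv = (W, v)" by (cases wv)
  show ?case
  proof (cases p)
    case Nil thus ?thesis using Cons.prems by auto
  next
    case (Cons m ms)
    show ?thesis
    proof (cases ps)
      case Nil
      show ?thesis unfolding \<open>p = m # ms\<close> wv Nil net_eval.simps affine_def
        using Cons.prems by (intro continuous_intros) auto
    next
      case (Cons wv' ps')
      obtain W' v' where wv': "wv' = (W', v')" by (cases wv')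
      have "continuous_on UNIV (\<lambda>t. relu (affine m W v (g t)) j)" for j
        unfolding relu_def affine_def using Cons.prems by (intro continuous_intros) auto
      hence "continuous_on UNIV (\<lambda>t. net_eval ms ps (relu (affine m W v (g t))) i)"
        by (rule Cons.IH)
      thus ?thesis unfolding \<open>p = m # ms\<close> wv Cons wv' by simp
    qed
  qed
qed

lemma net_cont: "continuous_on UNIV (\<lambda>x::vec. net_eval p ps x i)"
  using net_eval_cont[of "\<lambda>x. x" p ps i] by (simp add: continuous_on_product_coordinates)

lemma relu_net_cont: "f \<in> relu_net_class D L p s F \<Longrightarrow> continuous_on UNIV f"
  unfolding relu_net_class_def using net_cont by auto


locale sample = model +
  fixes n :: nat
  assumes n_pos: "0 < n"
begin

interpretation P: prob_space P by (rule prob_P)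

abbreviation "\<Omega> \<equiv> sample_space P n"

lemma prob_Omega: "prob_space \<Omega>"
  unfolding sample_space_def by (intro prob_space_PiM prob_P)

interpretation O: prob_space \<Omega> by (rule prob_Omega)

lemma comp_meas_fun: "i < n \<Longrightarrow> (\<lambda>\<omega>. \<omega> i) \<in> measurable \<Omega> P"
  unfolding sample_space_def by (intro measurable_component_singleton) auto

lemma comp_meas: "f \<in> borel_measurable P \<Longrightarrow> i < n \<Longrightarrow> (\<lambda>\<omega>. f (\<omega> i)) \<in> borel_measurable \<Omega>"
  using measurable_compose[OF comp_meas_fun] by blast

lemma distr_comp: "i < n \<Longrightarrow> distr \<Omega> P (\<lambda>\<omega>. \<omega> i) = P"
  unfolding sample_space_def by (rule distr_PiM_component) (auto intro: prob_P)

lemma comp_int: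
  fixes f :: "vec \<times> real \<Rightarrow> real"
  assumes f: "integrable P f" and i: "i < n"
  shows "integrable \<Omega> (\<lambda>\<omega>. f (\<omega> i))" "(LINT \<omega>|\<Omega>. f (\<omega> i)) = integral\<^sup>L P f"
proof -
  have fm: "f \<in> borel_measurable P" using f by simp
  have "integrable (distr \<Omega> P (\<lambda>\<omega>. \<omega> i)) f" using f distr_comp[OF i] by simp
  thus "integrable \<Omega> (\<lambda>\<omega>. f (\<omega> i))"
    using integrable_distr_eq[OF comp_meas_fun[OF i] fm] by simp
  have "integral\<^sup>L P f = integral\<^sup>L (distr \<Omega> P (\<lambda>\<omega>. \<omega> i)) f" using distr_comp[OF i] by simp
  also have "\<dots> = (LINT \<omega>|\<Omega>. f (\<omega> i))" by (rule integral_distr[OF comp_meas_fun[OF i] fm])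
  finally show "(LINT \<omega>|\<Omega>. f (\<omega> i)) = integral\<^sup>L P f" by simp
qed

lemma comp_AE: "AE z in P. Prop z \<Longrightarrow> AE \<omega> in \<Omega>. \<forall>i<n. Prop (\<omega> i)"
proof -
  assume a: "AE z in P. Prop z"
  have "\<forall>i\<in>{..<n}. AE \<omega> in \<Omega>. Prop (\<omega> i)"
    unfolding sample_space_def using a by (auto intro!: AE_PiM_component prob_P)
  hence "AE \<omega> in \<Omega>. \<forall>i\<in>{..<n}. Prop (\<omega> i)" by (subst AE_finite_all) auto
  thus ?thesis by auto
qed

lemma prod_nn:
  assumes g: "g \<in> borel_measurable P"
  shows "(\<integral>\<^sup>+\<omega>. (\<Prod>i<n. g (\<omega> i)) \<partial>\<Omega>) = (\<integral>\<^sup>+z. g z \<partial>P) ^ n"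
proof -
  interpret PP: product_prob_space "\<lambda>_. P" "{..<n}"
    by (intro product_prob_space.intro product_sigma_finite.intro product_prob_space_axioms.intro
        prob_space_imp_sigma_finite prob_P)
  have "(\<integral>\<^sup>+\<omega>. (\<Prod>i\<in>{..<n}. g (\<omega> i)) \<partial>\<Omega>) = (\<Prod>i\<in>{..<n}. integral\<^sup>N P g)"
    unfolding sample_space_def using g by (intro PP.product_nn_integral_prod) auto
  thus ?thesis by simp
qed

end


locale mainctx = sample +
  fixes L :: nat and p :: "nat list" and s :: nat and F \<delta> :: real
    and fhat :: "(nat \<Rightarrow> vec \<times> real) \<Rightarrow> vec \<Rightarrow> real"
    and m M Ce :: real
  assumes hm: "0 < m" and hM: "0 \<le> M"
    and quad: "\<And>a b. \<bar>a\<bar> \<le> max \<bar>F\<bar> \<bar>B0\<bar> \<Longrightarrow> \<bar>b\<bar> \<le> max \<bar>F\<bar> \<bar>B0\<bar> \<Longrightarrow>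
        m * (a - b)^2 \<le> Dv a b \<and> Dv a b \<le> M * (a - b)^2"
    and hCe: "integrable P eps" "(LINT z|P. \<bar>eps z\<bar>) \<le> Ce"
    and delta: "0 < \<delta>"
    and cover: "\<exists>Cs. finite Cs \<and> sup_ball_cover D \<delta> Cs (relu_net_class D L p s F)"
    and fS: "\<forall>\<omega>. fhat \<omega> \<in> relu_net_class D L p s F"
    and fmeas: "\<forall>i<n. (\<lambda>\<omega>. fhat \<omega> (fst (\<omega> i))) \<in> borel_measurable (sample_space P n)"
begin

abbreviation "S \<equiv> relu_net_class D L p s F"
abbreviation "K \<equiv> max \<bar>F\<bar> \<bar>B0\<bar>"

interpretation P: prob_space P by (rule prob_P)
interpretation O: prob_space \<Omega> by (rule prob_Omega)
interpretation mu: prob_space \<mu> by (rule mu)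

lemma S_ne: "S \<noteq> {}" using fS by blast

lemma S_cont: "f \<in> S \<Longrightarrow> continuous_on UNIV f" by (rule relu_net_cont)

lemma S_meas: "f \<in> S \<Longrightarrow> f \<in> borel_measurable borel"
  by (intro borel_measurable_continuous_onI S_cont)

lemma S_bnd: "f \<in> S \<Longrightarrow> x \<in> D \<Longrightarrow> \<bar>f x\<bar> \<le> K"
  unfolding relu_net_class_def by force

lemma f0_bndK: "x \<in> D \<Longrightarrow> \<bar>f0 x\<bar> \<le> K"
  using f0_bnd[of x] by auto

lemma K_nonneg: "0 \<le> K" by simp

lemma good_AE: "AE \<omega> in \<Omega>. \<forall>i<n. fst (\<omega> i) \<in> D"
  by (rule comp_AE[OF AE_P_D])

lemma Dv_meas[measurable]: "(\<lambda>z. Dv (fst z) (snd z)) \<in> borel_measurable (borel \<Otimes>\<^sub>M borel)"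
  unfolding Dv_def by measurable

lemma Dv_bnd: "\<bar>a\<bar> \<le> K \<Longrightarrow> \<bar>b\<bar> \<le> K \<Longrightarrow> \<bar>Dv a b\<bar> \<le> M * (2 * K)^2"
proof -
  assume ab: "\<bar>a\<bar> \<le> K" "\<bar>b\<bar> \<le> K"
  have "Dv a b \<le> M * (a - b)^2" using quad[OF ab] by simp
  also have "(a - b)^2 \<le> (2 * K)^2"
  proof -
    have "\<bar>a - b\<bar> \<le> 2 * K" using ab by linarith
    hence "\<bar>a - b\<bar>^2 \<le> (2 * K)^2" by (intro power_mono) auto
    thus ?thesis by simp
  qed
  hence "M * (a - b)^2 \<le> M * (2 * K)^2" using hM by (intro mult_left_mono)
  finally show ?thesis using Dv_nonneg[of a b] by simp
qed

lemma comp_fst_meas: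
  assumes g[measurable]: "g \<in> borel_measurable borel" and i: "i < n"
  shows "(\<lambda>\<omega>. g (fst (\<omega> i))) \<in> borel_measurable \<Omega>"
  by (rule comp_meas[OF _ i]) (rule meas_P, measurable)

lemma eps_comp_meas: "i < n \<Longrightarrow> (\<lambda>\<omega>. eps (\<omega> i)) \<in> borel_measurable \<Omega>"
  by (rule comp_meas) (rule meas_P, measurable)

lemma abs_eps_comp: "i < n \<Longrightarrow> integrable \<Omega> (\<lambda>\<omega>. \<bar>eps (\<omega> i)\<bar>) \<and> (LINT \<omega>|\<Omega>. \<bar>eps (\<omega> i)\<bar>) \<le> Ce"
  using comp_int[OF integrable_abs[OF hCe(1)]] hCe(2) by simp

lemma fhat_comp_meas: "i < n \<Longrightarrow> (\<lambda>\<omega>. fhat \<omega> (fst (\<omega> i))) \<in> borel_measurable \<Omega>"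
  using fmeas by blast

definition Rw :: "(nat \<Rightarrow> vec \<times> real) \<Rightarrow> real" where
  "Rw \<omega> = 1 / real n * (\<Sum>i<n. Dv (fhat \<omega> (fst (\<omega> i))) (f0 (fst (\<omega> i))))"

definition noise :: "(nat \<Rightarrow> vec \<times> real) \<Rightarrow> real" where
  "noise \<omega> = 1 / real n * (\<Sum>i<n. eps (\<omega> i) * (fhat \<omega> (fst (\<omega> i)) - f0 (fst (\<omega> i))))"

lemma risk_eq: "risk_hat h \<nu> P n fhat f0 = (LINT \<omega>|\<Omega>. Rw \<omega>)"
  unfolding risk_hat_def Rw_def by (simp add: ell_eq)

lemma emp_diff: "emp_loss h \<nu> n \<omega> f - emp_loss h \<nu> n \<omega> f0 =
   1 / real n * (\<Sum>i<n. Dv (f (fst (\<omega> i))) (f0 (fst (\<omega> i))) - eps (\<omega> i) * (f (fst (\<omega> i)) - f0 (fst (\<omega> i))))"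
proof -
  have "Dv (f (fst (\<omega> i))) (f0 (fst (\<omega> i))) - eps (\<omega> i) * (f (fst (\<omega> i)) - f0 (fst (\<omega> i)))
    = (- snd (\<omega> i) * f (fst (\<omega> i)) + psi h \<nu> (f (fst (\<omega> i)))) - (- snd (\<omega> i) * f0 (fst (\<omega> i)) + psi h \<nu> (f0 (fst (\<omega> i))))" for i
    unfolding Dv_def by (simp add: algebra_simps)
  hence "(\<Sum>i<n. Dv (f (fst (\<omega> i))) (f0 (fst (\<omega> i))) - eps (\<omega> i) * (f (fst (\<omega> i)) - f0 (fst (\<omega> i))))
    = (\<Sum>i<n. - snd (\<omega> i) * f (fst (\<omega> i)) + psi h \<nu> (f (fst (\<omega> i)))) - (\<Sum>i<n. - snd (\<omega> i) * f0 (fst (\<omega> i)) + psi h \<nu> (f0 (fst (\<omega> i))))"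
    by (simp only: sum_subtractf[symmetric])
  thus ?thesis unfolding emp_loss_def by (simp only: right_diff_distrib)
qed

lemma Rw_meas: "Rw \<in> borel_measurable \<Omega>"
proof -
  have "(\<lambda>\<omega>. Dv (fhat \<omega> (fst (\<omega> i))) (f0 (fst (\<omega> i)))) \<in> borel_measurable \<Omega>" if "i < n" for i
    using measurable_compose[OF measurable_Pair[OF fhat_comp_meas[OF that] comp_fst_meas[OF f0_meas that]] Dv_meas]
    by simp
  thus ?thesis unfolding Rw_def by (intro borel_measurable_times borel_measurable_const borel_measurable_sum) auto
qed


lemma good_bnds:
  assumes "\<forall>i<n. fst (\<omega> i) \<in> D" "i < n" "f \<in> S"
  shows "\<bar>f (fst (\<omega> i))\<bar> \<le> K" "\<bar>f0 (fst (\<omega> i))\<bar> \<le> K"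
  using assms S_bnd f0_bndK by auto

lemma Rw_int: "integrable \<Omega> Rw"
proof (rule O.integrable_const_bound[where B="M * (2 * K)^2"])
  show "Rw \<in> borel_measurable \<Omega>" by (rule Rw_meas)
  show "AE \<omega> in \<Omega>. norm (Rw \<omega>) \<le> M * (2 * K)^2"
    using good_AE
  proof eventually_elim
    case (elim \<omega>)
    have "\<bar>\<Sum>i<n. Dv (fhat \<omega> (fst (\<omega> i))) (f0 (fst (\<omega> i)))\<bar> \<le> (\<Sum>i<n. M * (2 * K)^2)"
      by (rule order_trans[OF sum_abs sum_mono]) (use elim good_bnds fS Dv_bnd in blast)
    also have "\<dots> = real n * (M * (2 * K)^2)" by simp
    finally show ?case using n_pos unfolding Rw_def by (simp add: abs_mult field_simps)
  qed
qed

lemma noise_term_int: "i < n \<Longrightarrow> integrable \<Omega> (\<lambda>\<omega>. eps (\<omega> i) * (fhat \<omega> (fst (\<omega> i)) - f0 (fst (\<omega> i))))"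
proof -
  assume i: "i < n"
  have ie: "integrable \<Omega> (\<lambda>\<omega>. (2 * K) * \<bar>eps (\<omega> i)\<bar>)" using abs_eps_comp[OF i] by simp
  show ?thesis
  proof (rule Bochner_Integration.integrable_bound[OF ie])
    show "(\<lambda>\<omega>. eps (\<omega> i) * (fhat \<omega> (fst (\<omega> i)) - f0 (fst (\<omega> i)))) \<in> borel_measurable \<Omega>"
      using eps_comp_meas[OF i] fhat_comp_meas[OF i] comp_fst_meas[OF f0_meas i] by measurable
    show "AE \<omega> in \<Omega>. norm (eps (\<omega> i) * (fhat \<omega> (fst (\<omega> i)) - f0 (fst (\<omega> i)))) \<le> norm (2 * K * \<bar>eps (\<omega> i)\<bar>)"
      using good_AE
    proof eventually_elim
      case (elim \<omega>)
      have "\<bar>fhat \<omega> (fst (\<omega> i)) - f0 (fst (\<omega> i))\<bar> \<le> 2 * K"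
        using good_bnds[OF elim i fS[rule_format, of \<omega>]] by linarith
      hence "\<bar>eps (\<omega> i)\<bar> * \<bar>fhat \<omega> (fst (\<omega> i)) - f0 (fst (\<omega> i))\<bar> \<le> \<bar>eps (\<omega> i)\<bar> * (2 * K)"
        by (intro mult_left_mono) auto
      thus ?case by (simp add: abs_mult mult.commute)
    qed
  qed
qed

lemma noise_int: "integrable \<Omega> noise"
  unfolding noise_def by (intro Bochner_Integration.integrable_mult_right Bochner_Integration.integrable_sum noise_term_int) auto

lemma emp_meas:
  assumes g[measurable]: "g \<in> borel_measurable borel"
  shows "(\<lambda>\<omega>. emp_loss h \<nu> n \<omega> g) \<in> borel_measurable \<Omega>"
proof -
  have "(\<lambda>\<omega>. - snd (\<omega> i) * g (fst (\<omega> i)) + psi h \<nu> (g (fst (\<omega> i)))) \<in> borel_measurable \<Omega>" if "i < n" for i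
    by (rule comp_meas[OF _ that, where f="\<lambda>z. - snd z * g (fst z) + psi h \<nu> (g (fst z))"]) (rule meas_P, measurable)
  thus ?thesis unfolding emp_loss_def by (intro borel_measurable_times borel_measurable_const borel_measurable_sum) auto
qed

lemma emp_cont:
  assumes f: "continuous_on UNIV f"
  shows "continuous_on UNIV (\<lambda>\<omega>::nat \<Rightarrow> vec \<times> real. emp_loss h \<nu> n \<omega> f)"
proof -
  have pc: "continuous_on UNIV (psi h \<nu>)" using psi_cont by (intro continuous_at_imp_continuous_on) auto
  have c1: "continuous_on UNIV (\<lambda>\<omega>::nat \<Rightarrow> vec \<times> real. \<omega> i)" for i by (rule continuous_on_product_coordinates)
  have c2: "continuous_on UNIV (\<lambda>\<omega>::nat \<Rightarrow> vec \<times> real. fst (\<omega> i))" for i by (intro continuous_intros c1)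
  have c3: "continuous_on UNIV (\<lambda>\<omega>::nat \<Rightarrow> vec \<times> real. f (fst (\<omega> i)))" for i
    by (rule continuous_on_compose2[OF f c2]) auto
  have c4: "continuous_on UNIV (\<lambda>\<omega>::nat \<Rightarrow> vec \<times> real. psi h \<nu> (f (fst (\<omega> i))))" for i
    by (rule continuous_on_compose2[OF pc c3]) auto
  show ?thesis unfolding emp_loss_def using c1 c3 c4 by (intro continuous_intros) auto
qed

definition EI :: "(nat \<Rightarrow> vec \<times> real) \<Rightarrow> real" where
  "EI \<omega> = (INF f\<in>S. emp_loss h \<nu> n \<omega> f)"

lemma EI_meas: "EI \<in> borel_measurable \<Omega>"
proof -
  obtain S' where S': "S' \<subseteq> S" "countable S'" "S' \<noteq> {}" "\<forall>\<omega>. (INF f\<in>S. emp_loss h \<nu> n \<omega> f) = (INF f\<in>S'. emp_loss h \<nu> n \<omega> f)"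
    using inf_countable[of S "\<lambda>\<omega> f. emp_loss h \<nu> n \<omega> f"] S_ne emp_cont S_cont by blast
  have "(\<lambda>\<omega>. INF f\<in>S'. emp_loss h \<nu> n \<omega> f) \<in> borel_measurable \<Omega>"
    using S' by (intro borel_measurable_cINF_real emp_meas S_meas) auto
  thus ?thesis unfolding EI_def using S'(4) by simp
qed

definition Lw :: "(nat \<Rightarrow> vec \<times> real) \<Rightarrow> real" where
  "Lw \<omega> = 1 / real n * (\<Sum>i<n. 2 * K * \<bar>eps (\<omega> i)\<bar>)"

lemma Lw_int: "integrable \<Omega> Lw"
  unfolding Lw_def using abs_eps_comp
  by (intro Bochner_Integration.integrable_mult_right Bochner_Integration.integrable_sum) auto

lemma emp_lower:
  assumes g: "\<forall>i<n. fst (\<omega> i) \<in> D" and f: "f \<in> S"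
  shows "- Lw \<omega> \<le> emp_loss h \<nu> n \<omega> f - emp_loss h \<nu> n \<omega> f0"
proof -
  have "- (2 * K * \<bar>eps (\<omega> i)\<bar>) \<le> Dv (f (fst (\<omega> i))) (f0 (fst (\<omega> i))) - eps (\<omega> i) * (f (fst (\<omega> i)) - f0 (fst (\<omega> i)))" if i: "i < n" for i
  proof -
    have "\<bar>f (fst (\<omega> i)) - f0 (fst (\<omega> i))\<bar> \<le> 2 * K" using good_bnds[OF g i f] by linarith
    hence h1: "\<bar>eps (\<omega> i)\<bar> * \<bar>f (fst (\<omega> i)) - f0 (fst (\<omega> i))\<bar> \<le> \<bar>eps (\<omega> i)\<bar> * (2 * K)" by (intro mult_left_mono) auto
    have "eps (\<omega> i) * (f (fst (\<omega> i)) - f0 (fst (\<omega> i))) \<le> \<bar>eps (\<omega> i) * (f (fst (\<omega> i)) - f0 (fst (\<omega> i)))\<bar>"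
      by (rule abs_ge_self)
    also have "\<dots> = \<bar>eps (\<omega> i)\<bar> * \<bar>f (fst (\<omega> i)) - f0 (fst (\<omega> i))\<bar>" by (rule abs_mult)
    also note h1
    finally have "eps (\<omega> i) * (f (fst (\<omega> i)) - f0 (fst (\<omega> i))) \<le> 2 * K * \<bar>eps (\<omega> i)\<bar>"
      by (simp add: mult_ac)
    thus ?thesis using Dv_nonneg[of "f (fst (\<omega> i))" "f0 (fst (\<omega> i))"] by linarith
  qed
  hence "(\<Sum>i<n. - (2 * K * \<bar>eps (\<omega> i)\<bar>)) \<le> (\<Sum>i<n. Dv (f (fst (\<omega> i))) (f0 (fst (\<omega> i))) - eps (\<omega> i) * (f (fst (\<omega> i)) - f0 (fst (\<omega> i))))"
    by (intro sum_mono) auto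
  hence "1 / real n * (\<Sum>i<n. - (2 * K * \<bar>eps (\<omega> i)\<bar>)) \<le> 1 / real n * (\<Sum>i<n. Dv (f (fst (\<omega> i))) (f0 (fst (\<omega> i))) - eps (\<omega> i) * (f (fst (\<omega> i)) - f0 (fst (\<omega> i))))"
    by (intro mult_left_mono) auto
  thus ?thesis unfolding emp_diff Lw_def by (simp add: sum_negf)
qed

lemma emp_bdd: "\<forall>i<n. fst (\<omega> i) \<in> D \<Longrightarrow> bdd_below ((\<lambda>f. emp_loss h \<nu> n \<omega> f) ` S)"
  using emp_lower unfolding bdd_below_def
  by (intro exI[of _ "emp_loss h \<nu> n \<omega> f0 - Lw \<omega>"]) (force simp: algebra_simps)

lemma EF_E0: "emp_loss h \<nu> n \<omega> (fhat \<omega>) - emp_loss h \<nu> n \<omega> f0 = Rw \<omega> - noise \<omega>"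
  unfolding emp_diff Rw_def noise_def by (simp add: sum_subtractf right_diff_distrib)

lemma EI_upper:
  assumes g: "\<forall>i<n. fst (\<omega> i) \<in> D" and f: "f \<in> S"
  shows "EI \<omega> \<le> emp_loss h \<nu> n \<omega> f"
  unfolding EI_def using emp_bdd[OF g] f by (intro cINF_lower) auto

lemma EI_lower:
  assumes g: "\<forall>i<n. fst (\<omega> i) \<in> D"
  shows "- Lw \<omega> \<le> EI \<omega> - emp_loss h \<nu> n \<omega> f0"
proof -
  have "emp_loss h \<nu> n \<omega> f0 - Lw \<omega> \<le> EI \<omega>"
    unfolding EI_def using S_ne emp_lower[OF g] by (intro cINF_greatest) (auto simp: algebra_simps)
  thus ?thesis by simp
qed

end


lemma convex_bnd:
  fixes a b lam K :: real
  assumes "\<bar>a\<bar> \<le> K" "\<bar>b\<bar> \<le> K" "0 \<le> lam" "lam \<le> 1"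
  shows "\<bar>b + lam * (a - b)\<bar> \<le> K"
proof -
  have e: "b + lam * (a - b) = (1 - lam) * b + lam * a" by (simp add: algebra_simps)
  have "\<bar>(1 - lam) * b\<bar> \<le> (1 - lam) * K" using assms by (simp add: abs_mult mult_left_mono)
  moreover have "\<bar>lam * a\<bar> \<le> lam * K" using assms by (simp add: abs_mult mult_left_mono)
  ultimately have "\<bar>(1 - lam) * b + lam * a\<bar> \<le> (1 - lam) * K + lam * K"
    using abs_triangle_ineq[of "(1 - lam) * b" "lam * a"] by linarith
  thus ?thesis unfolding e by (simp add: algebra_simps)
qed

context mainctx begin

interpretation P: prob_space P by (rule prob_P)
interpretation O: prob_space \<Omega> by (rule prob_Omega)
interpretation mu: prob_space \<mu> by (rule mu)

lemma cover_T: "\<exists>T. finite T \<and> T \<subseteq> S \<and> T \<noteq> {} \<and> card T \<le> covering_number D \<delta> S \<and>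
   (\<forall>f\<in>S. \<exists>t\<in>T. \<forall>x\<in>D. \<bar>f x - t x\<bar> \<le> 2 * \<delta>)"
proof -
  obtain Cs where "finite Cs" "sup_ball_cover D \<delta> Cs S" using cover by blast
  hence ex: "\<exists>Cs. finite Cs \<and> card Cs = card Cs \<and> sup_ball_cover D \<delta> Cs S" by blast
  have "\<exists>Cs. finite Cs \<and> card Cs = covering_number D \<delta> S \<and> sup_ball_cover D \<delta> Cs S"
    unfolding covering_number_def by (rule LeastI_ex) (use ex in blast)
  then obtain Cs0 where C0: "finite Cs0" "card Cs0 = covering_number D \<delta> S" "sup_ball_cover D \<delta> Cs0 S" by blast
  define A where "A = {c \<in> Cs0. \<exists>f\<in>S. \<forall>x\<in>D. \<bar>f x - c x\<bar> \<le> \<delta>}"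
  define pick where "pick c = (SOME f. f \<in> S \<and> (\<forall>x\<in>D. \<bar>f x - c x\<bar> \<le> \<delta>))" for c
  have pick: "pick c \<in> S \<and> (\<forall>x\<in>D. \<bar>pick c x - c x\<bar> \<le> \<delta>)" if "c \<in> A" for c
  proof -
    have "\<exists>f. f \<in> S \<and> (\<forall>x\<in>D. \<bar>f x - c x\<bar> \<le> \<delta>)" using that unfolding A_def by blast
    thus ?thesis unfolding pick_def by (rule someI_ex)
  qed
  have cov: "\<exists>c\<in>A. \<forall>x\<in>D. \<bar>f x - c x\<bar> \<le> \<delta>" if fS': "f \<in> S" for f
  proof -
    obtain c where "c \<in> Cs0" "\<forall>x\<in>D. \<bar>f x - c x\<bar> \<le> \<delta>" using C0(3) fS' unfolding sup_ball_cover_def by blast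
    thus ?thesis using fS' unfolding A_def by blast
  qed
  show ?thesis
  proof (intro exI conjI ballI)
    show "finite (pick ` A)" using C0(1) by (simp add: A_def)
    show "pick ` A \<subseteq> S" using pick by auto
    obtain f where "f \<in> S" using S_ne by blast
    thus "pick ` A \<noteq> {}" using cov by blast
    have "card (pick ` A) \<le> card A" using C0(1) by (intro card_image_le) (simp add: A_def)
    also have "\<dots> \<le> card Cs0" using C0(1) by (intro card_mono) (auto simp: A_def)
    finally show "card (pick ` A) \<le> covering_number D \<delta> S" using C0(2) by simp
  next
    fix f assume f: "f \<in> S"
    obtain c where c: "c \<in> A" "\<forall>x\<in>D. \<bar>f x - c x\<bar> \<le> \<delta>" using cov[OF f] by blast
    show "\<exists>t\<in>pick ` A. \<forall>x\<in>D. \<bar>f x - t x\<bar> \<le> 2 * \<delta>"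
    proof (intro bexI ballI)
      fix x assume x: "x \<in> D"
      have "\<bar>f x - c x\<bar> \<le> \<delta>" "\<bar>pick c x - c x\<bar> \<le> \<delta>" using c pick[OF c(1)] x by auto
      thus "\<bar>f x - pick c x\<bar> \<le> 2 * \<delta>" by linarith
    qed (use c in auto)
  qed
qed

definition Tc where "Tc = (SOME T. finite T \<and> T \<subseteq> S \<and> T \<noteq> {} \<and> card T \<le> covering_number D \<delta> S \<and>
   (\<forall>f\<in>S. \<exists>t\<in>T. \<forall>x\<in>D. \<bar>f x - t x\<bar> \<le> 2 * \<delta>))"

lemma Tc: "finite Tc" "Tc \<subseteq> S" "Tc \<noteq> {}" "card Tc \<le> covering_number D \<delta> S"
   "\<And>f. f \<in> S \<Longrightarrow> \<exists>t\<in>Tc. \<forall>x\<in>D. \<bar>f x - t x\<bar> \<le> 2 * \<delta>"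
  using someI_ex[OF cover_T] unfolding Tc_def[symmetric] by blast+

lemma card_Tc: "1 \<le> card Tc" using Tc(1,3) by (simp add: Suc_le_eq card_gt_0_iff)

lemma ln_card: "ln (real (card Tc)) \<le> ln (real (covering_number D \<delta> S))"
  using Tc(4) card_Tc by (intro ln_mono) auto


definition Y :: "real \<Rightarrow> (vec \<Rightarrow> real) \<Rightarrow> vec \<times> real \<Rightarrow> real" where
  "Y lam t z = lam * (t (fst z) - f0 (fst z)) * eps z - Dv (f0 (fst z) + lam * (t (fst z) - f0 (fst z))) (f0 (fst z))"

definition X :: "real \<Rightarrow> (vec \<Rightarrow> real) \<Rightarrow> (nat \<Rightarrow> vec \<times> real) \<Rightarrow> real" where
  "X lam t \<omega> = (\<Sum>i<n. Y lam t (\<omega> i))"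

lemma Y_meas2: "t \<in> S \<Longrightarrow> Y lam t \<in> borel_measurable (borel \<Otimes>\<^sub>M borel)"
proof -
  assume t: "t \<in> S"
  have [measurable]: "t \<in> borel_measurable borel" by (rule S_meas[OF t])
  show ?thesis unfolding Y_def Dv_def by measurable
qed

lemma Y_int:
  assumes t: "t \<in> S" and lam: "0 \<le> lam" "lam \<le> 1"
  shows "integrable P (Y lam t)"
proof -
  have ib: "integrable P (\<lambda>z. 2 * K * \<bar>eps z\<bar> + M * (2 * K)^2)"
    using hCe(1) by (intro Bochner_Integration.integrable_add integrable_abs Bochner_Integration.integrable_mult_right) auto
  show ?thesis
  proof (rule Bochner_Integration.integrable_bound[OF ib])
    show "Y lam t \<in> borel_measurable P" by (rule meas_P[OF Y_meas2[OF t]])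
    show "AE z in P. norm (Y lam t z) \<le> norm (2 * K * \<bar>eps z\<bar> + M * (2 * K)^2)"
      using AE_P_D
    proof eventually_elim
      case (elim z)
      have a: "\<bar>t (fst z)\<bar> \<le> K" "\<bar>f0 (fst z)\<bar> \<le> K" using S_bnd[OF t elim] f0_bndK[OF elim] by auto
      have c: "\<bar>f0 (fst z) + lam * (t (fst z) - f0 (fst z))\<bar> \<le> K" by (rule convex_bnd[OF a(1) a(2) lam])
      have w: "\<bar>lam * (t (fst z) - f0 (fst z))\<bar> \<le> 2 * K"
      proof -
        have "\<bar>lam * (t (fst z) - f0 (fst z))\<bar> \<le> 1 * \<bar>t (fst z) - f0 (fst z)\<bar>"
          using lam by (simp add: abs_mult mult_left_le_one_le)
        moreover have "\<bar>t (fst z) - f0 (fst z)\<bar> \<le> 2 * K"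
          using a abs_triangle_ineq4[of "t (fst z)" "f0 (fst z)"] by linarith
        ultimately show ?thesis by linarith
      qed
      have "\<bar>lam * (t (fst z) - f0 (fst z)) * eps z\<bar> \<le> 2 * K * \<bar>eps z\<bar>"
        using w by (simp add: abs_mult mult_right_mono)
      moreover have "\<bar>Dv (f0 (fst z) + lam * (t (fst z) - f0 (fst z))) (f0 (fst z))\<bar> \<le> M * (2 * K)^2"
        by (rule Dv_bnd[OF c a(2)])
      ultimately have "\<bar>Y lam t z\<bar> \<le> 2 * K * \<bar>eps z\<bar> + M * (2 * K)^2"
        unfolding Y_def by linarith
      moreover have "0 \<le> 2 * K * \<bar>eps z\<bar> + M * (2 * K)^2" using hM by simp
      ultimately show ?case by simp
    qed
  qed
qed

lemma X_int: "t \<in> S \<Longrightarrow> 0 \<le> lam \<Longrightarrow> lam \<le> 1 \<Longrightarrow> integrable \<Omega> (X lam t)"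
  unfolding X_def by (intro Bochner_Integration.integrable_sum comp_int Y_int) auto

lemma X_meas: "t \<in> S \<Longrightarrow> X lam t \<in> borel_measurable \<Omega>"
  unfolding X_def by (intro borel_measurable_sum comp_meas meas_P Y_meas2) auto

lemma expX: 
  assumes t: "t \<in> S"
  shows "(\<integral>\<^sup>+\<omega>. ennreal (exp (X lam t \<omega>)) \<partial>\<Omega>) = 1"
proof -
  have [measurable]: "t \<in> borel_measurable borel" by (rule S_meas[OF t])
  have g: "(\<lambda>z. ennreal (exp (Y lam t z))) \<in> borel_measurable P"
    using meas_P[OF Y_meas2[OF t]] by measurable
  have "(\<integral>\<^sup>+\<omega>. ennreal (exp (X lam t \<omega>)) \<partial>\<Omega>) = (\<integral>\<^sup>+\<omega>. (\<Prod>i<n. ennreal (exp (Y lam t (\<omega> i)))) \<partial>\<Omega>)"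
    unfolding X_def by (intro nn_integral_cong) (simp add: exp_sum prod_ennreal)
  also have "\<dots> = (\<integral>\<^sup>+z. ennreal (exp (Y lam t z)) \<partial>P) ^ n" by (rule prod_nn[OF g])
  also have "(\<integral>\<^sup>+z. ennreal (exp (Y lam t z)) \<partial>P) = 1"
    unfolding Y_def using mgf_P[of "\<lambda>x. lam * (t x - f0 x)"] by simp
  finally show ?thesis by simp
qed

lemma expX_meas: "t \<in> S \<Longrightarrow> (\<lambda>\<omega>. ennreal (exp (X lam t \<omega>))) \<in> borel_measurable \<Omega>"
  using X_meas[of t lam] by measurable

lemma expX_meas': "t \<in> S \<Longrightarrow> (\<lambda>\<omega>. exp (X lam t \<omega>)) \<in> borel_measurable \<Omega>"
  using X_meas[of t lam] by measurable

definition Mx :: "real \<Rightarrow> (nat \<Rightarrow> vec \<times> real) \<Rightarrow> real" where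
  "Mx lam \<omega> = Max ((\<lambda>t. X lam t \<omega>) ` Tc)"

lemma Mx_ge: "t \<in> Tc \<Longrightarrow> X lam t \<omega> \<le> Mx lam \<omega>"
  unfolding Mx_def using Tc(1) by (intro Max_ge) auto

lemma Mx_attained: "\<exists>t\<in>Tc. Mx lam \<omega> = X lam t \<omega>"
proof -
  have "Mx lam \<omega> \<in> (\<lambda>t. X lam t \<omega>) ` Tc" unfolding Mx_def using Tc(1,3) by (intro Max_in) auto
  thus ?thesis by auto
qed

lemma Mx_meas: "Mx lam \<in> borel_measurable \<Omega>"
  unfolding Mx_def using Tc(1,2) by (intro borel_measurable_Max X_meas) auto

lemma Mx_int: "0 \<le> lam \<Longrightarrow> lam \<le> 1 \<Longrightarrow> integrable \<Omega> (Mx lam)"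
proof -
  assume lam: "0 \<le> lam" "lam \<le> 1"
  have ib: "integrable \<Omega> (\<lambda>\<omega>. \<Sum>t\<in>Tc. \<bar>X lam t \<omega>\<bar>)"
    using Tc(2) lam by (intro Bochner_Integration.integrable_sum integrable_abs X_int) auto
  show ?thesis
  proof (rule Bochner_Integration.integrable_bound[OF ib Mx_meas], intro AE_I2)
    fix \<omega>
    obtain t where t: "t \<in> Tc" "Mx lam \<omega> = X lam t \<omega>" using Mx_attained by blast
    have "\<bar>X lam t \<omega>\<bar> \<le> (\<Sum>t\<in>Tc. \<bar>X lam t \<omega>\<bar>)"
      using Tc(1) t(1) by (intro member_le_sum) auto
    thus "norm (Mx lam \<omega>) \<le> norm (\<Sum>t\<in>Tc. \<bar>X lam t \<omega>\<bar>)" using t(2) by simp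
  qed
qed

lemma expMx_nn: "(\<integral>\<^sup>+\<omega>. ennreal (exp (Mx lam \<omega>)) \<partial>\<Omega>) \<le> ennreal (real (card Tc))"
proof -
  have "(\<integral>\<^sup>+\<omega>. ennreal (exp (Mx lam \<omega>)) \<partial>\<Omega>) \<le> (\<integral>\<^sup>+\<omega>. (\<Sum>t\<in>Tc. ennreal (exp (X lam t \<omega>))) \<partial>\<Omega>)"
  proof (rule nn_integral_mono)
    fix \<omega>
    obtain t where t: "t \<in> Tc" "Mx lam \<omega> = X lam t \<omega>" using Mx_attained by blast
    have "ennreal (exp (X lam t \<omega>)) \<le> (\<Sum>t\<in>Tc. ennreal (exp (X lam t \<omega>)))"
      using Tc(1) t(1) by (intro member_le_sum) auto
    thus "ennreal (exp (Mx lam \<omega>)) \<le> (\<Sum>t\<in>Tc. ennreal (exp (X lam t \<omega>)))" using t(2) by simp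
  qed
  also have "\<dots> = (\<Sum>t\<in>Tc. (\<integral>\<^sup>+\<omega>. ennreal (exp (X lam t \<omega>)) \<partial>\<Omega>))"
    using Tc(2) by (intro nn_integral_sum) (auto intro!: expX_meas expX_meas')
  also have "\<dots> = (\<Sum>t\<in>Tc. 1)" using Tc(2) by (intro sum.cong) (auto intro!: expX)
  also have "\<dots> = ennreal (real (card Tc))" by (simp add: ennreal_of_nat_eq_real_of_nat)
  finally show ?thesis .
qed

lemma EMx: 
  assumes lam: "0 \<le> lam" "lam \<le> 1"
  shows "(LINT \<omega>|\<Omega>. Mx lam \<omega>) \<le> ln (real (card Tc))"
proof -
  define N1 where "N1 = real (card Tc)"
  have N1: "1 \<le> N1" using card_Tc by (simp add: N1_def)
  have em: "(\<lambda>\<omega>. exp (Mx lam \<omega>)) \<in> borel_measurable \<Omega>" using Mx_meas by measurable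
  have ie: "integrable \<Omega> (\<lambda>\<omega>. exp (Mx lam \<omega>))"
    by (rule integrableI_bounded[OF em]) (use expMx_nn[of lam] in \<open>auto simp: N1_def top_unique less_top[symmetric]\<close>)
  have "ennreal (LINT \<omega>|\<Omega>. exp (Mx lam \<omega>)) = (\<integral>\<^sup>+\<omega>. ennreal (exp (Mx lam \<omega>)) \<partial>\<Omega>)"
    by (rule nn_integral_eq_integral[symmetric, OF ie]) simp
  hence "ennreal (LINT \<omega>|\<Omega>. exp (Mx lam \<omega>)) \<le> ennreal N1" using expMx_nn[of lam] by (simp add: N1_def)
  hence Ee: "(LINT \<omega>|\<Omega>. exp (Mx lam \<omega>)) \<le> N1" using N1 by (simp add: ennreal_le_iff)
  have pw: "Mx lam \<omega> \<le> exp (Mx lam \<omega>) / N1 + ln N1 - 1" for \<omega>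
  proof -
    have "1 + (Mx lam \<omega> - ln N1) \<le> exp (Mx lam \<omega> - ln N1)" by (rule exp_ge_add_one_self)
    also have "\<dots> = exp (Mx lam \<omega>) / N1" using N1 by (simp add: exp_diff)
    finally show ?thesis by simp
  qed
  have "(LINT \<omega>|\<Omega>. Mx lam \<omega>) \<le> (LINT \<omega>|\<Omega>. exp (Mx lam \<omega>) / N1 + (ln N1 - 1))"
    using pw by (intro integral_mono Mx_int lam Bochner_Integration.integrable_add integrable_divide ie) (auto simp: algebra_simps)
  also have "\<dots> = (LINT \<omega>|\<Omega>. exp (Mx lam \<omega>)) / N1 + (ln N1 - 1)"
    using ie by (simp add: O.prob_space)
  also have "\<dots> \<le> N1 / N1 + (ln N1 - 1)" using Ee N1 by (intro add_right_mono divide_right_mono) auto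
  also have "\<dots> = ln N1" using N1 by simp
  finally show ?thesis by (simp add: N1_def)
qed

end


lemma sq_sum_le: "((x::real) + y)^2 \<le> 2 * x^2 + 2 * y^2"
proof -
  have "0 \<le> (x - y)^2" by simp
  thus ?thesis by (simp add: power2_eq_square algebra_simps)
qed

context mainctx begin

lemma per_i:
  assumes a: "\<bar>a\<bar> \<le> K" and b: "\<bar>b\<bar> \<le> K" and tt: "\<bar>tt\<bar> \<le> K" and at: "\<bar>a - tt\<bar> \<le> 2 * \<delta>"
    and lam: "0 < lam" "lam \<le> 1"
  shows "lam * e * (a - b) \<le> (lam * (tt - b) * e - Dv (b + lam * (tt - b)) b)
      + M * lam^2 * (2 * Dv a b / m + 8 * \<delta>^2) + 2 * lam * \<delta> * \<bar>e\<bar>"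
proof -
  have c: "\<bar>b + lam * (tt - b)\<bar> \<le> K" using convex_bnd[OF tt b] lam by simp
  have B: "Dv (b + lam * (tt - b)) b \<le> M * (lam * (tt - b))^2"
    using quad[OF c b] by simp
  have C: "(tt - b)^2 \<le> 2 * (a - b)^2 + 8 * \<delta>^2"
  proof -
    have "(tt - b)^2 = ((a - b) + (tt - a))^2" by simp
    also have "\<dots> \<le> 2 * (a - b)^2 + 2 * (tt - a)^2" by (rule sq_sum_le)
    also have "(tt - a)^2 \<le> (2 * \<delta>)^2"
    proof -
      have "\<bar>tt - a\<bar> \<le> 2 * \<delta>" using at by (simp add: abs_minus_commute)
      hence "\<bar>tt - a\<bar>^2 \<le> (2 * \<delta>)^2" by (intro power_mono) auto
      thus ?thesis by simp
    qed
    finally show ?thesis by (simp add: power_mult_distrib)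
  qed
  have Dd: "(a - b)^2 \<le> Dv a b / m" using quad[OF a b] hm by (simp add: field_simps)
  have "(lam * (tt - b))^2 = lam^2 * (tt - b)^2" by (simp add: power_mult_distrib)
  also have "\<dots> \<le> lam^2 * (2 * (a - b)^2 + 8 * \<delta>^2)" using C by (intro mult_left_mono) auto
  also have "\<dots> \<le> lam^2 * (2 * (Dv a b / m) + 8 * \<delta>^2)" using Dd by (intro mult_left_mono) auto
  finally have "M * (lam * (tt - b))^2 \<le> M * (lam^2 * (2 * (Dv a b / m) + 8 * \<delta>^2))"
    using hM by (intro mult_left_mono)
  with B have B2: "Dv (b + lam * (tt - b)) b \<le> M * lam^2 * (2 * Dv a b / m + 8 * \<delta>^2)" by (simp add: mult_ac)
  have E: "lam * e * (a - tt) \<le> 2 * lam * \<delta> * \<bar>e\<bar>"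
  proof -
    have "lam * e * (a - tt) \<le> \<bar>lam * e * (a - tt)\<bar>" by (rule abs_ge_self)
    also have "\<dots> = lam * \<bar>e\<bar> * \<bar>a - tt\<bar>" using lam by (simp add: abs_mult)
    also have "\<dots> \<le> lam * \<bar>e\<bar> * (2 * \<delta>)" using at lam by (intro mult_left_mono) auto
    finally show ?thesis by (simp add: mult_ac)
  qed
  have eq: "lam * e * (a - b) = (lam * (tt - b) * e - Dv (b + lam * (tt - b)) b) + Dv (b + lam * (tt - b)) b + lam * e * (a - tt)"
    by (simp add: algebra_simps)
  show ?thesis using B2 E unfolding eq by linarith
qed

definition Ea :: "(nat \<Rightarrow> vec \<times> real) \<Rightarrow> real" where
  "Ea \<omega> = 1 / real n * (\<Sum>i<n. \<bar>eps (\<omega> i)\<bar>)"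

lemma Ea_int: "integrable \<Omega> Ea \<and> (LINT \<omega>|\<Omega>. Ea \<omega>) \<le> Ce"
proof
  show i: "integrable \<Omega> Ea"
    unfolding Ea_def using abs_eps_comp
    by (intro Bochner_Integration.integrable_mult_right Bochner_Integration.integrable_sum) auto
  have "(LINT \<omega>|\<Omega>. Ea \<omega>) = 1 / real n * (\<Sum>i<n. (LINT \<omega>|\<Omega>. \<bar>eps (\<omega> i)\<bar>))"
    unfolding Ea_def using abs_eps_comp by (simp add: Bochner_Integration.integral_sum)
  also have "\<dots> \<le> 1 / real n * (\<Sum>i<n. Ce)"
    using abs_eps_comp by (intro mult_left_mono sum_mono) auto
  also have "\<dots> = Ce" using n_pos by simp
  finally show "(LINT \<omega>|\<Omega>. Ea \<omega>) \<le> Ce" .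
qed

lemma noise_pw:
  assumes g: "\<forall>i<n. fst (\<omega> i) \<in> D" and lam: "0 < lam" "lam \<le> 1"
  shows "noise \<omega> \<le> Mx lam \<omega> / (real n * lam) + (2 * M / m) * lam * Rw \<omega> + 8 * M * lam * \<delta>^2 + 2 * \<delta> * Ea \<omega>"
proof -
  obtain t where t: "t \<in> Tc" "\<forall>x\<in>D. \<bar>fhat \<omega> x - t x\<bar> \<le> 2 * \<delta>" using Tc(5)[OF fS[rule_format, of \<omega>]] by blast
  have tS: "t \<in> S" using t(1) Tc(2) by blast
  have pi: "lam * eps (\<omega> i) * (fhat \<omega> (fst (\<omega> i)) - f0 (fst (\<omega> i))) \<le> Y lam t (\<omega> i)
      + M * lam^2 * (2 * Dv (fhat \<omega> (fst (\<omega> i))) (f0 (fst (\<omega> i))) / m + 8 * \<delta>^2) + 2 * lam * \<delta> * \<bar>eps (\<omega> i)\<bar>" if i: "i < n" for i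
    unfolding Y_def
    by (rule per_i[OF good_bnds(1)[OF g i fS[rule_format, of \<omega>]] good_bnds(2)[OF g i fS[rule_format, of \<omega>]]
          good_bnds(1)[OF g i tS] t(2)[rule_format, OF g[rule_format, OF i]] lam])
  have "(\<Sum>i<n. lam * eps (\<omega> i) * (fhat \<omega> (fst (\<omega> i)) - f0 (fst (\<omega> i)))) \<le>
     (\<Sum>i<n. Y lam t (\<omega> i) + M * lam^2 * (2 * Dv (fhat \<omega> (fst (\<omega> i))) (f0 (fst (\<omega> i))) / m + 8 * \<delta>^2) + 2 * lam * \<delta> * \<bar>eps (\<omega> i)\<bar>)"
    using pi by (intro sum_mono) auto
  also have "\<dots> = X lam t \<omega> + M * lam^2 * (2 / m) * (\<Sum>i<n. Dv (fhat \<omega> (fst (\<omega> i))) (f0 (fst (\<omega> i))))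
      + M * lam^2 * 8 * \<delta>^2 * real n + 2 * lam * \<delta> * (\<Sum>i<n. \<bar>eps (\<omega> i)\<bar>)"
    unfolding X_def by (simp add: sum.distrib sum_distrib_left algebra_simps)
  also have "X lam t \<omega> \<le> Mx lam \<omega>" by (rule Mx_ge[OF t(1)])
  finally have s: "lam * (\<Sum>i<n. eps (\<omega> i) * (fhat \<omega> (fst (\<omega> i)) - f0 (fst (\<omega> i)))) \<le>
     Mx lam \<omega> + M * lam^2 * (2 / m) * (\<Sum>i<n. Dv (fhat \<omega> (fst (\<omega> i))) (f0 (fst (\<omega> i))))
      + M * lam^2 * 8 * \<delta>^2 * real n + 2 * lam * \<delta> * (\<Sum>i<n. \<bar>eps (\<omega> i)\<bar>)"
    by (simp add: sum_distrib_left mult_ac)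
  have nl: "0 < real n * lam" using n_pos lam by simp
  have "noise \<omega> = (lam * (\<Sum>i<n. eps (\<omega> i) * (fhat \<omega> (fst (\<omega> i)) - f0 (fst (\<omega> i))))) / (real n * lam)"
    unfolding noise_def using lam by (simp add: field_simps)
  also have "\<dots> \<le> (Mx lam \<omega> + M * lam^2 * (2 / m) * (\<Sum>i<n. Dv (fhat \<omega> (fst (\<omega> i))) (f0 (fst (\<omega> i))))
      + M * lam^2 * 8 * \<delta>^2 * real n + 2 * lam * \<delta> * (\<Sum>i<n. \<bar>eps (\<omega> i)\<bar>)) / (real n * lam)"
    using s nl by (intro divide_right_mono) auto
  also have "\<dots> = Mx lam \<omega> / (real n * lam) + (2 * M / m) * lam * Rw \<omega> + 8 * M * lam * \<delta>^2 + 2 * \<delta> * Ea \<omega>"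
    unfolding Rw_def Ea_def using nl lam n_pos hm by (simp add: field_simps power2_eq_square)
  finally show ?thesis .
qed


interpretation P: prob_space P by (rule prob_P)
interpretation O: prob_space \<Omega> by (rule prob_Omega)
interpretation mu: prob_space \<mu> by (rule mu)

definition E0 where "E0 \<omega> = emp_loss h \<nu> n \<omega> f0"

lemma EIE0_int: "integrable \<Omega> (\<lambda>\<omega>. EI \<omega> - E0 \<omega>)"
proof -
  have ib: "integrable \<Omega> (\<lambda>\<omega>. \<bar>Rw \<omega>\<bar> + \<bar>noise \<omega>\<bar> + Lw \<omega>)"
    by (intro Bochner_Integration.integrable_add integrable_abs Rw_int noise_int Lw_int)
  show ?thesis
  proof (rule Bochner_Integration.integrable_bound[OF ib])
    show "(\<lambda>\<omega>. EI \<omega> - E0 \<omega>) \<in> borel_measurable \<Omega>"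
      unfolding E0_def using EI_meas emp_meas[OF f0_meas] by measurable
    show "AE \<omega> in \<Omega>. norm (EI \<omega> - E0 \<omega>) \<le> norm (\<bar>Rw \<omega>\<bar> + \<bar>noise \<omega>\<bar> + Lw \<omega>)"
      using good_AE
    proof eventually_elim
      case (elim \<omega>)
      have l: "- Lw \<omega> \<le> EI \<omega> - E0 \<omega>" using EI_lower[OF elim] by (simp add: E0_def)
      have "EI \<omega> \<le> emp_loss h \<nu> n \<omega> (fhat \<omega>)" by (rule EI_upper[OF elim fS[rule_format]])
      hence u: "EI \<omega> - E0 \<omega> \<le> Rw \<omega> - noise \<omega>" using EF_E0[of \<omega>] by (simp add: E0_def)
      have "0 \<le> Lw \<omega>" unfolding Lw_def by (intro mult_nonneg_nonneg sum_nonneg) auto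
      thus ?case using l u by (simp add: abs_le_iff) linarith
    qed
  qed
qed

lemma EIE0_le: "(LINT \<omega>|\<Omega>. EI \<omega> - E0 \<omega>) \<le> (INF f\<in>S. LINT x|\<mu>. ell h \<nu> x f f0)"
proof (rule cINF_greatest[OF S_ne])
  fix f assume f: "f \<in> S"
  have fm[measurable]: "f \<in> borel_measurable borel" by (rule S_meas[OF f])
  define phi where "phi x = Dv (f x) (f0 x)" for x
  have phim: "phi \<in> borel_measurable borel" unfolding phi_def Dv_def by measurable
  have phii: "integrable \<mu> phi"
  proof (rule mu.integrable_const_bound[where B="M * (2 * K)^2"])
    show "AE x in \<mu>. norm (phi x) \<le> M * (2 * K)^2"
      using mu_D
    proof eventually_elim
      case (elim x) show ?case using Dv_bnd[OF S_bnd[OF f elim] f0_bndK[OF elim]] by (simp add: phi_def)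
    qed
    show "phi \<in> borel_measurable \<mu>" by (rule meas_mu[OF phim])
  qed
  have gb: "AE x in \<mu>. \<bar>f x - f0 x\<bar> \<le> 2 * K"
    using mu_D
  proof eventually_elim
    case (elim x) thus ?case using S_bnd[OF f elim] f0_bndK[OF elim] abs_triangle_ineq4[of "f x" "f0 x"] by linarith
  qed
  have gm: "(\<lambda>x. f x - f0 x) \<in> borel_measurable borel" by measurable
  note ec = eps_center[OF gm gb]
  note mp = marg_P[OF phim phii]
  define psiz where "psiz z = phi (fst z) - eps z * (f (fst z) - f0 (fst z))" for z
  have pzi: "integrable P psiz" unfolding psiz_def using ec(1) mp(1) by (intro Bochner_Integration.integrable_diff)
  have pzint: "integral\<^sup>L P psiz = (LINT x|\<mu>. phi x)"
    unfolding psiz_def using ec mp by (simp add: Bochner_Integration.integral_diff)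
  have empf: "emp_loss h \<nu> n \<omega> f - E0 \<omega> = 1 / real n * (\<Sum>i<n. psiz (\<omega> i))" for \<omega>
    unfolding E0_def emp_diff psiz_def phi_def by simp
  have ie: "integrable \<Omega> (\<lambda>\<omega>. emp_loss h \<nu> n \<omega> f - E0 \<omega>)"
    unfolding empf using comp_int(1)[OF pzi]
    by (intro Bochner_Integration.integrable_mult_right Bochner_Integration.integrable_sum) auto
  have "(LINT \<omega>|\<Omega>. EI \<omega> - E0 \<omega>) \<le> (LINT \<omega>|\<Omega>. emp_loss h \<nu> n \<omega> f - E0 \<omega>)"
  proof (rule integral_mono_AE[OF EIE0_int ie])
    show "AE \<omega> in \<Omega>. EI \<omega> - E0 \<omega> \<le> emp_loss h \<nu> n \<omega> f - E0 \<omega>"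
      using good_AE by eventually_elim (use EI_upper f in auto)
  qed
  also have "\<dots> = 1 / real n * (\<Sum>i<n. (LINT \<omega>|\<Omega>. psiz (\<omega> i)))"
    unfolding empf using comp_int(1)[OF pzi] by (simp add: Bochner_Integration.integral_sum)
  also have "\<dots> = 1 / real n * (\<Sum>i<n. (LINT x|\<mu>. phi x))"
    using comp_int(2)[OF pzi] pzint by simp
  also have "\<dots> = (LINT x|\<mu>. phi x)" using n_pos by simp
  also have "\<dots> = (LINT x|\<mu>. ell h \<nu> x f f0)" by (simp add: phi_def ell_eq)
  finally show "(LINT \<omega>|\<Omega>. EI \<omega> - E0 \<omega>) \<le> (LINT x|\<mu>. ell h \<nu> x f f0)" .
qed

lemma noise_le:
  assumes lam: "0 < lam" "lam \<le> 1"
  shows "(LINT \<omega>|\<Omega>. noise \<omega>) \<le> ln (real (covering_number D \<delta> S)) / (real n * lam)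
     + (2 * M / m) * lam * risk_hat h \<nu> P n fhat f0 + 8 * M * lam * \<delta>^2 + 2 * \<delta> * Ce"
proof -
  have ib: "integrable \<Omega> (\<lambda>\<omega>. Mx lam \<omega> / (real n * lam) + (2 * M / m) * lam * Rw \<omega> + 8 * M * lam * \<delta>^2 + 2 * \<delta> * Ea \<omega>)"
    using Mx_int[of lam] lam Rw_int Ea_int
    by (intro Bochner_Integration.integrable_add integrable_divide Bochner_Integration.integrable_mult_right O.integrable_const) auto
  have "(LINT \<omega>|\<Omega>. noise \<omega>) \<le> (LINT \<omega>|\<Omega>. Mx lam \<omega> / (real n * lam) + (2 * M / m) * lam * Rw \<omega> + 8 * M * lam * \<delta>^2 + 2 * \<delta> * Ea \<omega>)"
  proof (rule integral_mono_AE[OF noise_int ib])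
    show "AE \<omega> in \<Omega>. noise \<omega> \<le> Mx lam \<omega> / (real n * lam) + (2 * M / m) * lam * Rw \<omega> + 8 * M * lam * \<delta>^2 + 2 * \<delta> * Ea \<omega>"
      using good_AE
    proof eventually_elim
      case (elim \<omega>) show ?case by (rule noise_pw[OF elim lam])
    qed
  qed
  also have "\<dots> = (LINT \<omega>|\<Omega>. Mx lam \<omega>) / (real n * lam) + (2 * M / m) * lam * (LINT \<omega>|\<Omega>. Rw \<omega>) + 8 * M * lam * \<delta>^2 + 2 * \<delta> * (LINT \<omega>|\<Omega>. Ea \<omega>)"
    using Mx_int[of lam] lam Rw_int Ea_int
    by (simp add: Bochner_Integration.integral_add Bochner_Integration.integrable_add integrable_divide O.prob_space)
  also have "(LINT \<omega>|\<Omega>. Mx lam \<omega>) / (real n * lam) \<le> ln (real (covering_number D \<delta> S)) / (real n * lam)"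
    using EMx[of lam] lam ln_card n_pos by (intro divide_right_mono) auto
  also have "2 * \<delta> * (LINT \<omega>|\<Omega>. Ea \<omega>) \<le> 2 * \<delta> * Ce" using Ea_int delta by (intro mult_left_mono) auto
  finally show ?thesis unfolding risk_eq by simp
qed

lemma main_ineq:
  assumes lam: "0 < lam" "lam \<le> 1"
  shows "risk_hat h \<nu> P n fhat f0 \<le> (INF f\<in>S. LINT x|\<mu>. ell h \<nu> x f f0) + Delta_n h \<nu> P n S fhat
     + ln (real (covering_number D \<delta> S)) / (real n * lam)
     + (2 * M / m) * lam * risk_hat h \<nu> P n fhat f0 + 8 * M * lam * \<delta>^2 + 2 * \<delta> * Ce"
proof -
  have pw: "Rw \<omega> = (emp_loss h \<nu> n \<omega> (fhat \<omega>) - EI \<omega>) + (EI \<omega> - E0 \<omega>) + noise \<omega>" for \<omega>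
    using EF_E0[of \<omega>] by (simp add: E0_def)
  have iD: "integrable \<Omega> (\<lambda>\<omega>. emp_loss h \<nu> n \<omega> (fhat \<omega>) - EI \<omega>)"
  proof -
    have "integrable \<Omega> (\<lambda>\<omega>. Rw \<omega> - (EI \<omega> - E0 \<omega>) - noise \<omega>)"
      by (intro Bochner_Integration.integrable_diff Rw_int EIE0_int noise_int)
    moreover have "(\<lambda>\<omega>. Rw \<omega> - (EI \<omega> - E0 \<omega>) - noise \<omega>) = (\<lambda>\<omega>. emp_loss h \<nu> n \<omega> (fhat \<omega>) - EI \<omega>)"
      using pw by (auto simp: fun_eq_iff)
    ultimately show ?thesis by metis
  qed
  have Dn: "Delta_n h \<nu> P n S fhat = (LINT \<omega>|\<Omega>. emp_loss h \<nu> n \<omega> (fhat \<omega>) - EI \<omega>)"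
    unfolding Delta_n_def EI_def by simp
  have "risk_hat h \<nu> P n fhat f0 = (LINT \<omega>|\<Omega>. (emp_loss h \<nu> n \<omega> (fhat \<omega>) - EI \<omega>) + (EI \<omega> - E0 \<omega>) + noise \<omega>)"
    unfolding risk_eq by (intro Bochner_Integration.integral_cong refl pw)
  also have "\<dots> = (LINT \<omega>|\<Omega>. (emp_loss h \<nu> n \<omega> (fhat \<omega>) - EI \<omega>) + (EI \<omega> - E0 \<omega>)) + (LINT \<omega>|\<Omega>. noise \<omega>)"
    by (rule Bochner_Integration.integral_add[OF Bochner_Integration.integrable_add[OF iD EIE0_int] noise_int])
  also have "(LINT \<omega>|\<Omega>. (emp_loss h \<nu> n \<omega> (fhat \<omega>) - EI \<omega>) + (EI \<omega> - E0 \<omega>)) = Delta_n h \<nu> P n S fhat + (LINT \<omega>|\<Omega>. EI \<omega> - E0 \<omega>)"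
    unfolding Dn by (rule Bochner_Integration.integral_add[OF iD EIE0_int])
  finally show ?thesis using EIE0_le noise_le[OF lam] by linarith
qed

lemma risk_nonneg: "0 \<le> risk_hat h \<nu> P n fhat f0"
  unfolding risk_eq Rw_def by (intro integral_nonneg_AE AE_I2 mult_nonneg_nonneg sum_nonneg Dv_nonneg) auto

lemma ln_N_nonneg: "0 \<le> ln (real (covering_number D \<delta> S))"
  using Tc(4) card_Tc by simp

end


lemma final_arith:
  fixes R J Lg \<delta> \<alpha> \<beta> \<gamma> C :: real
  assumes R: "0 \<le> R" and Lg: "0 \<le> Lg" and d: "0 < \<delta>" and a: "0 < \<alpha>" and b: "0 < \<beta>" and g: "0 \<le> \<gamma>"
    and C: "2 * \<alpha> \<le> C" "2 * \<beta> \<le> C" "2 \<le> C" "\<gamma> \<le> 2 * C"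
    and H: "\<And>lam. 0 < lam \<Longrightarrow> lam \<le> 1 \<Longrightarrow> R \<le> J + Lg / lam + \<alpha> * lam * R + \<beta> * lam * \<delta>^2 + \<gamma> * \<delta>"
  shows "R \<le> J + sqrt (2 * C * R * Lg) + sqrt (2 * C) * (Lg + sqrt Lg * \<delta>) + 2 * \<delta> * C"
proof -
  define A where "A = \<alpha> * R + \<beta> * \<delta>^2"
  have A: "0 < A" unfolding A_def using R a b d by (simp add: add_nonneg_pos)
  have H': "R \<le> J + Lg / lam + lam * A + \<gamma> * \<delta>" if "0 < lam" "lam \<le> 1" for lam
    using H[OF that] by (simp add: A_def algebra_simps)
  have nn: "0 \<le> sqrt (2 * C * R * Lg)" "0 \<le> sqrt (2 * C) * (Lg + sqrt Lg * \<delta>)"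
    using C R Lg d by auto
  have gd: "\<gamma> * \<delta> \<le> 2 * \<delta> * C" using C(4) d by (simp add: mult.commute mult_left_mono)
  show ?thesis
  proof (cases "Lg = 0")
    case True
    have "R \<le> J + \<gamma> * \<delta>"
    proof (rule ccontr)
      assume "\<not> R \<le> J + \<gamma> * \<delta>"
      hence pos: "0 < R - J - \<gamma> * \<delta>" by simp
      define lam where "lam = min 1 ((R - J - \<gamma> * \<delta>) / (2 * A))"
      have l: "0 < lam" "lam \<le> 1" using pos A by (auto simp: lam_def)
      have "lam * A \<le> (R - J - \<gamma> * \<delta>) / (2 * A) * A" unfolding lam_def using A by (intro mult_right_mono) auto
      also have "\<dots> = (R - J - \<gamma> * \<delta>) / 2" using A by simp
      finally have "lam * A \<le> (R - J - \<gamma> * \<delta>) / 2" .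
      hence "2 * (lam * A) \<le> R - J - \<gamma> * \<delta>" by (simp add: field_simps)
      moreover have "R \<le> J + lam * A + \<gamma> * \<delta>" using H'[OF l] True by simp
      ultimately show False using pos by linarith
    qed
    thus ?thesis using nn gd by linarith
  next
    case False
    hence Lp: "0 < Lg" using Lg by simp
    show ?thesis
    proof (cases "Lg \<le> A")
      case True
      define lam where "lam = sqrt (Lg / A)"
      have l: "0 < lam" "lam \<le> 1" using Lp A True by (auto simp: lam_def)
      have e1: "Lg / lam = sqrt (Lg * A)"
        using Lp A by (simp add: lam_def real_sqrt_divide field_simps real_sqrt_mult)
      have e2: "lam * A = sqrt (Lg * A)"
        using Lp A by (simp add: lam_def real_sqrt_divide field_simps real_sqrt_mult)
      have "R \<le> J + 2 * sqrt (Lg * A) + \<gamma> * \<delta>" using H'[OF l] e1 e2 by simp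
      also have "sqrt (Lg * A) \<le> sqrt (Lg * (\<alpha> * R)) + sqrt (Lg * (\<beta> * \<delta>^2))"
        unfolding A_def distrib_left using R a b Lg by (intro sqrt_add_le_add_sqrt) auto 
      also have "2 * (sqrt (Lg * (\<alpha> * R)) + sqrt (Lg * (\<beta> * \<delta>^2))) \<le> sqrt (2 * C * R * Lg) + sqrt (2 * C) * (sqrt Lg * \<delta>)"
      proof -
        have "2 * sqrt (Lg * (\<alpha> * R)) = sqrt (4 * \<alpha> * R * Lg)"
          by (simp add: real_sqrt_mult mult_ac)
        also have "\<dots> \<le> sqrt (2 * C * R * Lg)" using C(1) R Lg
          by (intro real_sqrt_le_mono mult_right_mono) auto
        finally have i1: "2 * sqrt (Lg * (\<alpha> * R)) \<le> sqrt (2 * C * R * Lg)" .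
        have "2 * sqrt (Lg * (\<beta> * \<delta>^2)) = sqrt (4 * \<beta>) * (sqrt Lg * \<delta>)"
          using d by (simp add: real_sqrt_mult mult_ac)
        also have "\<dots> \<le> sqrt (2 * C) * (sqrt Lg * \<delta>)" using C(2) d Lg
          by (intro mult_right_mono real_sqrt_le_mono) auto
        finally have i2: "2 * sqrt (Lg * (\<beta> * \<delta>^2)) \<le> sqrt (2 * C) * (sqrt Lg * \<delta>)" .
        show ?thesis using i1 i2 by simp
      qed
      hence "J + 2 * (sqrt (Lg * (\<alpha> * R)) + sqrt (Lg * (\<beta> * \<delta>\<^sup>2))) + \<gamma> * \<delta> \<le> J + sqrt (2 * C * R * Lg) + sqrt (2 * C) * (Lg + sqrt Lg * \<delta>) + 2 * \<delta> * C"
      proof -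
        have z: "0 \<le> sqrt (2 * C) * Lg" using C Lg by simp
        show ?thesis using gd z \<open>2 * (sqrt (Lg * (\<alpha> * R)) + sqrt (Lg * (\<beta> * \<delta>^2))) \<le> sqrt (2 * C * R * Lg) + sqrt (2 * C) * (sqrt Lg * \<delta>)\<close>
          by (simp add: distrib_left)
      qed
      ultimately show ?thesis by linarith
    next
      case False
      have "R \<le> J + Lg / 1 + 1 * A + \<gamma> * \<delta>" using H'[of 1] by simp
      hence "R \<le> J + 2 * Lg + \<gamma> * \<delta>" using False by simp
      moreover have "2 * Lg \<le> sqrt (2 * C) * Lg"
      proof -
        have "2 \<le> sqrt (2 * C)" using C(3) by (simp add: real_le_rsqrt)
        thus ?thesis using Lg by (intro mult_right_mono) auto
      qed
      moreover have "sqrt (2 * C) * Lg \<le> sqrt (2 * C) * (Lg + sqrt Lg * \<delta>)"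
        using d Lg C by (intro mult_left_mono) auto
      ultimately show ?thesis using nn gd by linarith
    qed
  qed
qed


theorem lemma6:
  fixes \<nu> :: "real measure" and h :: "real \<Rightarrow> real" and f0 :: "vec \<Rightarrow> real"
    and \<mu> :: "vec measure" and P :: "(vec \<times> real) measure" and D :: "vec set"
    and \<kappa> F :: real
  assumes nu: "sets \<nu> = sets borel"
    and h_meas: "h \<in> borel_measurable borel" and h_nonneg: "\<And>y. 0 \<le> h y"
    and psi_finite: "\<And>\<theta>. integrable \<nu> (\<lambda>y. h y * exp (\<theta> * y))"
    and mu: "prob_space \<mu>" "sets \<mu> = sets borel" and mu_D: "AE x in \<mu>. x \<in> D"
    and f0_meas: "f0 \<in> borel_measurable borel"
    and P_sets: "sets P = sets (borel :: (vec \<times> real) measure)"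
    and P_law: "\<And>A B. A \<in> sets borel \<Longrightarrow> B \<in> sets borel \<Longrightarrow>
        emeasure P (A \<times> B) = ennreal (LINT x:A|\<mu>. (LINT y:B|\<nu>. cond_dens h \<nu> f0 x y))"
    and A1_support: "\<exists>y1 y2. y1 \<noteq> y2 \<and> y1 \<in> h_support h \<nu> \<and> y2 \<in> h_support h \<nu>"
    and A1_bounded: "\<exists>B. \<forall>x\<in>D. \<bar>f0 x\<bar> \<le> B"
    and kappa: "\<kappa> > 0"
    and A1_tail: "AE x in \<mu>. \<forall>t>0.
        (LINT y|\<nu>. indicator {y. t \<le> \<bar>y - (LINT z|\<nu>. z * cond_dens h \<nu> f0 x z)\<bar>} y
                     * cond_dens h \<nu> f0 x y) \<le> 2 * exp (- t / \<kappa>)"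
  shows "\<exists>C>0. \<forall>(L::nat) (p::nat list) (s::nat) (n::nat) (\<delta>::real)
            (fhat :: (nat \<Rightarrow> vec \<times> real) \<Rightarrow> vec \<Rightarrow> real).
     0 < n \<longrightarrow> 0 < \<delta> \<longrightarrow>
     (\<exists>Cs. finite Cs \<and> sup_ball_cover D \<delta> Cs (relu_net_class D L p s F)) \<longrightarrow>
     (\<forall>\<omega>. fhat \<omega> \<in> relu_net_class D L p s F) \<longrightarrow>
     (\<forall>i<n. (\<lambda>\<omega>. fhat \<omega> (fst (\<omega> i))) \<in> borel_measurable (sample_space P n)) \<longrightarrow>
     (let S = relu_net_class D L p s F;
          N = real (covering_number D \<delta> S);
          R = risk_hat h \<nu> P n fhat f0
      in R \<le> (INF f\<in>S. LINT x|\<mu>. ell h \<nu> x f f0)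
              + sqrt (2 * C * R * ln N / real n)
              + sqrt (2 * C) * (ln N / real n + sqrt (ln N / real n) * \<delta>)
              + 2 * \<delta> * C
              + Delta_n h \<nu> P n S fhat)"
proof -
  interpret E: expfam2 \<nu> h
    by (intro expfam2.intro expfam.intro expfam2_axioms.intro) (use nu h_meas h_nonneg psi_finite A1_support in auto)
  obtain B0 where B0: "\<forall>x\<in>D. \<bar>f0 x\<bar> \<le> B0" using A1_bounded by blast
  have Mo: "model \<nu> h f0 \<mu> P D B0"
    by (intro model.intro model_axioms.intro E.expfam2_axioms)
       (use mu mu_D f0_meas P_sets P_law B0 in auto)
  interpret Mo: model \<nu> h f0 \<mu> P D B0 by (rule Mo)
  obtain m M0 where mM: "0 < m" "\<forall>a b. \<bar>a\<bar> \<le> max \<bar>F\<bar> \<bar>B0\<bar> \<longrightarrow> \<bar>b\<bar> \<le> max \<bar>F\<bar> \<bar>B0\<bar> \<longrightarrow>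
      m * (a - b)^2 \<le> E.Dv a b \<and> E.Dv a b \<le> M0 * (a - b)^2"
    using E.quad_bounds by blast
  define M where "M = max M0 1"
  have M: "1 \<le> M" by (simp add: M_def)
  have quad: "m * (a - b)^2 \<le> E.Dv a b \<and> E.Dv a b \<le> M * (a - b)^2"
    if "\<bar>a\<bar> \<le> max \<bar>F\<bar> \<bar>B0\<bar>" "\<bar>b\<bar> \<le> max \<bar>F\<bar> \<bar>B0\<bar>" for a b
  proof -
    have "M0 * (a - b)^2 \<le> M * (a - b)^2" by (intro mult_right_mono) (auto simp: M_def)
    thus ?thesis using mM(2) that by fastforce
  qed
  obtain Ce where Ce: "integrable P Mo.eps" "(LINT z|P. \<bar>Mo.eps z\<bar>) \<le> Ce" using Mo.eps_int by blast
  have "0 \<le> (LINT z|P. \<bar>Mo.eps z\<bar>)" by (rule integral_nonneg_AE) simp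
  hence Ce0: "0 \<le> Ce" using Ce(2) by linarith
  define \<alpha> where "\<alpha> = 2 * M / m"
  define \<beta> where "\<beta> = 8 * M"
  define \<gamma> where "\<gamma> = 2 * Ce"
  define C where "C = 2 * \<alpha> + 2 * \<beta> + 2 + \<gamma>"
  have \<alpha>: "0 < \<alpha>" using M mM(1) by (simp add: \<alpha>_def)
  have \<beta>: "0 < \<beta>" using M by (simp add: \<beta>_def)
  have \<gamma>: "0 \<le> \<gamma>" using Ce0 by (simp add: \<gamma>_def)
  have C: "0 < C" "2 * \<alpha> \<le> C" "2 * \<beta> \<le> C" "2 \<le> C" "\<gamma> \<le> 2 * C" using \<alpha> \<beta> \<gamma> by (auto simp: C_def)
  show ?thesis
  proof (intro exI[of _ C] conjI allI impI)
    show "0 < C" by (rule C(1))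
    fix L :: nat and p :: "nat list" and s :: nat and n :: nat and \<delta> :: real
      and fhat :: "(nat \<Rightarrow> vec \<times> real) \<Rightarrow> vec \<Rightarrow> real"
    assume n: "0 < n" and d: "0 < \<delta>"
      and cov: "\<exists>Cs. finite Cs \<and> sup_ball_cover D \<delta> Cs (relu_net_class D L p s F)"
      and fS: "\<forall>\<omega>. fhat \<omega> \<in> relu_net_class D L p s F"
      and fm: "\<forall>i<n. (\<lambda>\<omega>. fhat \<omega> (fst (\<omega> i))) \<in> borel_measurable (sample_space P n)"
    have MC: "mainctx \<nu> h f0 \<mu> P D B0 n L p s F \<delta> fhat m M Ce"
      by (intro mainctx.intro sample.intro mainctx_axioms.intro sample_axioms.intro Mo)
         (use n d cov fS fm mM(1) M quad Ce in auto)
    define S where "S = relu_net_class D L p s F"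
    define R where "R = risk_hat h \<nu> P n fhat f0"
    define N where "N = real (covering_number D \<delta> S)"
    define J where "J = (INF f\<in>S. LINT x|\<mu>. ell h \<nu> x f f0) + Delta_n h \<nu> P n S fhat"
    define Lg where "Lg = ln N / real n"
    have R0: "0 \<le> R" unfolding R_def by (rule mainctx.risk_nonneg[OF MC])
    have Lg0: "0 \<le> Lg" unfolding Lg_def N_def S_def using mainctx.ln_N_nonneg[OF MC] by simp
    have H: "R \<le> J + Lg / lam + \<alpha> * lam * R + \<beta> * lam * \<delta>^2 + \<gamma> * \<delta>" if "0 < lam" "lam \<le> 1" for lam
    proof -
      have "R \<le> (INF f\<in>S. LINT x|\<mu>. ell h \<nu> x f f0) + Delta_n h \<nu> P n S fhat
          + ln N / (real n * lam) + (2 * M / m) * lam * R + 8 * M * lam * \<delta>^2 + 2 * \<delta> * Ce"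
        unfolding R_def N_def S_def by (rule mainctx.main_ineq[OF MC that])
      moreover have "ln N / (real n * lam) = Lg / lam" by (simp add: Lg_def)
      ultimately show ?thesis by (simp add: J_def \<alpha>_def \<beta>_def \<gamma>_def algebra_simps)
    qed
    have "R \<le> J + sqrt (2 * C * R * Lg) + sqrt (2 * C) * (Lg + sqrt Lg * \<delta>) + 2 * \<delta> * C"
      by (rule final_arith[OF R0 Lg0 d \<alpha> \<beta> \<gamma> C(2-5) H])
    thus "let S = relu_net_class D L p s F; N = real (covering_number D \<delta> S); R = risk_hat h \<nu> P n fhat f0
      in R \<le> (INF f\<in>S. LINT x|\<mu>. ell h \<nu> x f f0) + sqrt (2 * C * R * ln N / real n)
          + sqrt (2 * C) * (ln N / real n + sqrt (ln N / real n) * \<delta>) + 2 * \<delta> * C + Delta_n h \<nu> P n S fhat"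
      unfolding Let_def S_def[symmetric] N_def[symmetric] R_def[symmetric]
      by (simp add: J_def Lg_def algebra_simps)
  qed
qed


end
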